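(* The function $\mathcal{R}(t,D_1,D_2)$ is jointly multiplicative in $t,D_1,D_2$: for all integers $t$ and positive integers $C_1,C_2,E_1,E_2$ with $\gcd(C_1C_2,E_1E_2)=1$, \[ \mathcal{R}(t,C_1E_1,C_2E_2)=\mathcal{R}(t,C_1,C_2)\,\mathcal{R}(t,E_1,E_2). \]
   Context: Notation: $e(x)=e^{2\pi ix}$. For integers $m_1,m_2,n_1,n_2$ and positive integers $D_1,D_2$, the $GL_3$ Kloosterman sum is \[ S(m_1,m_2,n_1,n_2;D_1,D_2)=\sum e\Big(\frac{m_1B_1+n_1(Y_1D_2-Z_1B_2)}{D_1}\Big)e\Big(\frac{m_2B_2+n_2(Y_2D_1-Z_2B_1)}{D_2}\Big), \] the sum over $B_1,C_1 \bmod D_1$, $B_2,C_2\bmod D_2$ with $\gcd(B_1,C_1,D_1)=\gcd(B_2,C_2,D_2)=1$ and $D_1C_2+B_1B_2+C_1D_2\equiv 0\pmod{D_1D_2}$, where $Y_1B_1+Z_1C_1\equiv 1\pmod{D_1}$, $Y_2B_2+Z_2C_2\equiv1\pmod{D_2}$ (independent of choices). For integers $a,b$ with $(a,D_1)=(b,D_2)=1$ and integers $u,t$, define \[ \widehat S(a,u,t,b;D_1,D_2)=\frac{1}{D_1D_2}\sum_{x\bmod D_1}\sum_{y\bmod D_2}S(a,y,x,b;D_1,D_2)\,e\Big(\frac{-xt}{D_1}\Big)e\Big(\frac{-yu}{D_2}\Big), \] and \[ \mathcal{R}(t,D_1,D_2)=\max_{(ab,D_1)=1}\ \sum_{u\bmod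 D_2}\big|\widehat S(a,u,bt,1;D_1,D_2)\big|, \] the maximum over integers $a,b$ coprime to $D_1$. *)

theory Defs
  imports "HOL-Analysis.Analysis" "HOL-Number_Theory.Cong"
begin

definition ee :: "real \<Rightarrow> complex" where
  "ee x = cis (2 * pi * x)"

text \<open>GL(3) Kloosterman sum S(m1,m2,n1,n2;D1,D2). Residues mod D are represented by
  {0..<D}; Y1,Z1 (resp. Y2,Z2) are some solution of Y1 B1 + Z1 C1 = 1 mod D1
  (the sum is independent of the choice).\<close>
definition kl3 :: "int \<Rightarrow> int \<Rightarrow> int \<Rightarrow> int \<Rightarrow> int \<Rightarrow> int \<Rightarrow> complex" where
  "kl3 m1 m2 n1 n2 D1 D2 =
    (\<Sum>(B1, C1, B2, C2) \<in> {(B1, C1, B2, C2). B1 \<in> {0..<D1} \<and> C1 \<in> {0..<D1} \<and>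
         B2 \<in> {0..<D2} \<and> C2 \<in> {0..<D2} \<and>
         gcd (gcd B1 C1) D1 = 1 \<and> gcd (gcd B2 C2) D2 = 1 \<and>
         [D1 * C2 + B1 * B2 + C1 * D2 = 0] (mod (D1 * D2))}.
       (let (Y1, Z1) = (SOME (Y, Z). [Y * B1 + Z * C1 = 1] (mod D1));
            (Y2, Z2) = (SOME (Y, Z). [Y * B2 + Z * C2 = 1] (mod D2))
        in ee (of_int (m1 * B1 + n1 * (Y1 * D2 - Z1 * B2)) / of_int D1) *
           ee (of_int (m2 * B2 + n2 * (Y2 * D1 - Z2 * B1)) / of_int D2)))"

definition kl3_hat :: "int \<Rightarrow> int \<Rightarrow> int \<Rightarrow> int \<Rightarrow> int \<Rightarrow> int \<Rightarrow> complex" where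
  "kl3_hat a u t b D1 D2 =
    (1 / of_int (D1 * D2)) *
    (\<Sum>x \<in> {0..<D1}. \<Sum>y \<in> {0..<D2}.
       kl3 a y x b D1 D2 * ee (of_int (- x * t) / of_int D1) * ee (of_int (- y * u) / of_int D2))"

text \<open>R(t,D1,D2): maximum over all integers a, b with gcd(ab, D1) = 1
  (the set of values is finite, so the supremum is the maximum).\<close>
definition calR :: "int \<Rightarrow> int \<Rightarrow> int \<Rightarrow> real" where
  "calR t D1 D2 =
    Sup ((\<lambda>(a, b). \<Sum>u \<in> {0..<D2}. cmod (kl3_hat a u (b * t) 1 D1 D2))
          ` {(a, b). coprime (a * b) D1})"

end

theory Submission
  imports Defs "HOL-Computational_Algebra.Primes"
begin


lemma ee_add: "ee (x + y) = ee x * ee y"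
  by (simp add: ee_def cis_mult distrib_left)

lemma ee_int: "ee (of_int n) = 1"
  unfolding ee_def by (metis cis_multiple_2pi Ints_of_int)

lemma ee_eq_1: "ee x = 1 \<longleftrightarrow> x \<in> \<int>"
proof
  assume "ee x = 1"
  hence "exp (\<i> * complex_of_real (2*pi*x)) = 1" by (simp add: ee_def cis_conv_exp)
  then obtain n :: int where "2*pi*x = of_int (2*n) * pi" by (auto simp: exp_eq_1)
  hence "x = of_int n" by simp
  thus "x \<in> \<int>" by simp
next
  assume "x \<in> \<int>" thus "ee x = 1" using ee_int by (auto elim: Ints_cases)
qed

lemma ee_cong:
  assumes "[x = y] (mod D)" "D \<noteq> 0"
  shows "ee (of_int x / of_int D) = ee (of_int y / of_int D)"
proof -
  obtain k where k: "x = y + D * k" using assms(1)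
    by (metis cong_iff_lin cong_sym)
  have "of_int x / of_int D = (of_int y / of_int D :: real) + of_int k"
    using assms(2) by (simp add: k field_simps)
  thus ?thesis by (simp add: ee_add ee_int)
qed

lemma ee_orth:
  fixes D k :: int
  assumes "D > 0"
  shows "(\<Sum>x\<in>{0..<D}. ee (of_int (x * k) / of_int D)) = (if D dvd k then of_int D else 0)"
proof -
  define w where "w = ee (of_int k / of_int D)"
  have eq: "ee (of_int (x * k) / of_int D) = w ^ nat x" if "x \<ge> 0" for x
  proof -
    have "ee (of_int (x * k) / of_int D) = ee (of_nat (nat x) * (of_int k / of_int D))"
      using that by simp
    also have "\<dots> = w ^ nat x"
      unfolding w_def ee_def by (simp add: Complex.DeMoivre mult_ac)
    finally show ?thesis .
  qed
  have "(\<Sum>x\<in>{0..<D}. ee (of_int (x * k) / of_int D)) = (\<Sum>x\<in>{0..<D}. w ^ nat x)"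
    using eq by (intro sum.cong) auto
  also have "\<dots> = (\<Sum>i<nat D. w ^ i)"
  proof -
    have "{0..<D} = int ` {..<nat D}" using assms
      by (auto simp: image_def intro!: bexI[of _ "nat _"])
    thus ?thesis by (simp add: sum.reindex inj_on_def)
  qed
  also have "\<dots> = (if D dvd k then of_int D else 0)"
  proof (cases "D dvd k")
    case True
    then obtain m where "k = D * m" by auto
    hence "w = 1" using assms unfolding w_def by (simp add: ee_int)
    thus ?thesis using True assms by simp
  next
    case False
    have "w \<noteq> 1"
    proof
      assume "w = 1"
      then obtain n where n: "of_int k / of_int D = (of_int n :: real)"
        unfolding w_def ee_eq_1 by (auto elim: Ints_cases)
      hence "k = D * n" using assms by (simp add: field_simps flip: of_int_mult)
      thus False using False by simp
    qed
    moreover have "w ^ nat D = 1"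
    proof -
      have "w ^ nat D = ee (of_nat (nat D) * (of_int k / of_int D))"
        unfolding w_def ee_def by (simp add: Complex.DeMoivre mult_ac)
      also have "\<dots> = ee (of_int k)" using assms by simp
      finally show ?thesis by (simp add: ee_int)
    qed
    ultimately show ?thesis using False by (simp add: geometric_sum)
  qed
  finally show ?thesis .
qed

lemma um_iff:
  fixes a b D :: int
  shows "gcd (gcd a b) D = 1 \<longleftrightarrow> (\<exists>Y Z. [Y * a + Z * b = 1] (mod D))"
proof
  assume "gcd (gcd a b) D = 1"
  then obtain u v where uv: "u * gcd a b + v * D = 1" by (metis bezout_int)
  obtain Y Z where YZ: "Y * a + Z * b = gcd a b" by (metis bezout_int)
  have "(u*Y) * a + (u*Z) * b + v * D = u * (Y * a + Z * b) + v * D" by (simp add: algebra_simps)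
  hence "(u*Y) * a + (u*Z) * b + v * D = u * gcd a b + v * D" by (simp add: YZ)
  hence "(u*Y) * a + (u*Z) * b + v * D = 1" using uv by simp
  hence "[(u*Y) * a + (u*Z) * b = 1] (mod D)"
    by (metis cong_iff_lin add.commute mult.commute)
  thus "\<exists>Y Z. [Y * a + Z * b = 1] (mod D)" by blast
next
  assume "\<exists>Y Z. [Y * a + Z * b = 1] (mod D)"
  then obtain Y Z where "[Y * a + Z * b = 1] (mod D)" by blast
  then obtain k where k: "1 = Y * a + Z * b + D * k" by (metis cong_iff_lin cong_sym)
  have "gcd (gcd a b) D dvd a" "gcd (gcd a b) D dvd b" "gcd (gcd a b) D dvd D"
    by (meson dvd_trans gcd_dvd1 gcd_dvd2)+
  hence "gcd (gcd a b) D dvd Y * a + Z * b + D * k" by (simp add: dvd_add)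
  hence "gcd (gcd a b) D dvd 1" by (metis k)
  thus "gcd (gcd a b) D = 1" by simp
qed



type_synonym tup = "int \<times> int \<times> int \<times> int"

definition PP :: "int \<Rightarrow> int \<Rightarrow> tup \<Rightarrow> bool" where
  "PP D1 D2 = (\<lambda>(B1,C1,B2,C2). gcd (gcd B1 C1) D1 = 1 \<and> gcd (gcd B2 C2) D2 = 1 \<and>
         [D1 * C2 + B1 * B2 + C1 * D2 = 0] (mod (D1 * D2)))"

definition box :: "int \<Rightarrow> int \<Rightarrow> tup set" where
  "box D1 D2 = {0..<D1} \<times> {0..<D1} \<times> {0..<D2} \<times> {0..<D2}"

definition Tset :: "int \<Rightarrow> int \<Rightarrow> tup set" where
  "Tset D1 D2 = {(B1, C1, B2, C2). B1 \<in> {0..<D1} \<and> C1 \<in> {0..<D1} \<and>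
         B2 \<in> {0..<D2} \<and> C2 \<in> {0..<D2} \<and>
         gcd (gcd B1 C1) D1 = 1 \<and> gcd (gcd B2 C2) D2 = 1 \<and>
         [D1 * C2 + B1 * B2 + C1 * D2 = 0] (mod (D1 * D2))}"

lemma Tset_alt: "Tset D1 D2 = {v \<in> box D1 D2. PP D1 D2 v}"
  by (auto simp: Tset_def box_def PP_def)

lemma finite_box: "finite (box D1 D2)" by (simp add: box_def)
lemma finite_Tset: "finite (Tset D1 D2)" by (simp add: Tset_alt finite_box)

definition N1 :: "int \<Rightarrow> int \<Rightarrow> tup \<Rightarrow> int" where
  "N1 D1 D2 = (\<lambda>(B1,C1,B2,C2). let (Y, Z) = (SOME (Y, Z). [Y * B1 + Z * C1 = 1] (mod D1)) in Y * D2 - Z * B2)"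

definition N2 :: "int \<Rightarrow> int \<Rightarrow> tup \<Rightarrow> int" where
  "N2 D1 D2 = (\<lambda>(B1,C1,B2,C2). let (Y, Z) = (SOME (Y, Z). [Y * B2 + Z * C2 = 1] (mod D2)) in Y * D1 - Z * B1)"

lemma kl3_alt:
  "kl3 m1 m2 n1 n2 D1 D2 = (\<Sum>v \<in> Tset D1 D2. 
      ee (of_int (m1 * fst v + n1 * N1 D1 D2 v) / of_int D1) *
      ee (of_int (m2 * fst (snd (snd v)) + n2 * N2 D1 D2 v) / of_int D2))"
  unfolding kl3_def Tset_def
  by (rule sum.cong) (auto simp: N1_def N2_def Let_def split: prod.splits)

lemma inv_choice:
  fixes D b c b' d' Y Z Y' Z' :: int
  assumes "[Y*b + Z*c = 1] (mod D)" "[Y'*b + Z'*c = 1] (mod D)" "[b*b' + c*d' = 0] (mod D)"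
  shows "[Y*d' - Z*b' = Y'*d' - Z'*b'] (mod D)"
proof -
  obtain a1 where h1: "Y*b + Z*c = 1 + D*a1" using cong_sym[OF assms(1)] unfolding cong_iff_lin by blast
  obtain a2 where h2: "Y'*b + Z'*c = 1 + D*a2" using cong_sym[OF assms(2)] unfolding cong_iff_lin by blast
  obtain a3 where h3: "b*b' + c*d' = 0 + D*a3" using cong_sym[OF assms(3)] unfolding cong_iff_lin by blast
  define p where "p = Y' - Y"
  define q where "q = Z' - Z"
  have id: "(p*d'-q*b')*(Y*b+Z*c) = (p*Z-q*Y)*(b*b'+c*d') + (Y*d'-Z*b')*(p*b+q*c)"
    by (simp add: algebra_simps)
  have pq: "p*b+q*c = D*(a2-a1)" unfolding p_def q_def using h1 h2 by (simp add: algebra_simps)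
  have "(p*d'-q*b')*(1 + D*a1) = (p*Z-q*Y)*(D*a3) + (Y*d'-Z*b')*(D*(a2-a1))"
    using id h1 h3 pq by simp
  hence "(p*d'-q*b') = D * ((p*Z - q*Y)*a3 + (Y*d' - Z*b')*(a2 - a1) - (p*d' - q*b')*a1)"
    by (simp add: algebra_simps)
  hence "(Y'*d' - Z'*b') - (Y*d' - Z*b') =
        D * ((p*Z - q*Y)*a3 + (Y*d' - Z*b')*(a2 - a1) - (p*d' - q*b')*a1)"
    unfolding p_def q_def by (simp add: algebra_simps)
  hence "(Y'*d' - Z'*b') = (Y*d' - Z*b') +
        D * ((p*Z - q*Y)*a3 + (Y*d' - Z*b')*(a2 - a1) - (p*d' - q*b')*a1)" by simp
  thus ?thesis unfolding cong_iff_lin by blast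
qed

lemma some_sol:
  assumes "[Y*b + Z*c = 1] (mod D)"
  obtains Y' Z' where "(SOME (Y, Z). [Y * b + Z * c = 1] (mod D)) = (Y', Z')"
    "[Y'*b + Z'*c = 1] (mod D)"
proof -
  have "\<exists>p. (case p of (Y, Z) \<Rightarrow> [Y * b + Z * c = 1] (mod D))" using assms by auto
  hence "case (SOME (Y, Z). [Y * b + Z * c = 1] (mod D)) of (Y, Z) \<Rightarrow> [Y * b + Z * c = 1] (mod D)"
    by (rule someI_ex)
  thus ?thesis using that by (auto split: prod.splits)
qed

lemma N1_any:
  assumes "[Y*B1 + Z*C1 = 1] (mod D1)" "[B1*B2 + C1*D2 = 0] (mod D1)"
  shows "[N1 D1 D2 (B1,C1,B2,C2) = Y*D2 - Z*B2] (mod D1)"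
proof -
  obtain Y' Z' where s: "(SOME (Y, Z). [Y * B1 + Z * C1 = 1] (mod D1)) = (Y', Z')"
    "[Y'*B1 + Z'*C1 = 1] (mod D1)" using some_sol[OF assms(1)] by blast
  have "N1 D1 D2 (B1,C1,B2,C2) = Y'*D2 - Z'*B2" by (simp add: N1_def s(1))
  thus ?thesis using inv_choice[OF s(2) assms(1) assms(2)] by simp
qed

lemma N2_any:
  assumes "[Y*B2 + Z*C2 = 1] (mod D2)" "[B2*B1 + C2*D1 = 0] (mod D2)"
  shows "[N2 D1 D2 (B1,C1,B2,C2) = Y*D1 - Z*B1] (mod D2)"
proof -
  obtain Y' Z' where s: "(SOME (Y, Z). [Y * B2 + Z * C2 = 1] (mod D2)) = (Y', Z')"
    "[Y'*B2 + Z'*C2 = 1] (mod D2)" using some_sol[OF assms(1)] by blast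
  have "N2 D1 D2 (B1,C1,B2,C2) = Y'*D1 - Z'*B1" by (simp add: N2_def s(1))
  thus ?thesis using inv_choice[OF s(2) assms(1) assms(2)] by simp
qed



lemma cong_shift: "[x + D*m = x] (mod (D::int))"
  unfolding cong_iff_lin by (intro exI[of _ "-m"]) simp

definition rel :: "int \<Rightarrow> int \<Rightarrow> tup \<Rightarrow> tup \<Rightarrow> bool" where
  "rel D1 D2 = (\<lambda>(B1,C1,B2,C2) (B1',C1',B2',C2'). \<exists>k l. B1' = B1 + D1*k \<and> B2' = B2 + D2*l \<and>
       [C1' = C1 - l*B1] (mod D1) \<and> [C2' = C2 - k*B2] (mod D2))"

lemma rel_simp: "rel D1 D2 (B1,C1,B2,C2) (B1',C1',B2',C2') \<longleftrightarrow> (\<exists>k l. B1' = B1 + D1*k \<and> B2' = B2 + D2*l \<and>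
       [C1' = C1 - l*B1] (mod D1) \<and> [C2' = C2 - k*B2] (mod D2))"
  by (simp add: rel_def)

lemma rel_sym:
  assumes "rel D1 D2 v w" shows "rel D1 D2 w v"
proof -
  obtain B1 C1 B2 C2 where v: "v = (B1,C1,B2,C2)" by (cases v) auto
  obtain B1' C1' B2' C2' where w: "w = (B1',C1',B2',C2')" by (cases w) auto
  from assms obtain k l where kl: "B1' = B1 + D1*k" "B2' = B2 + D2*l"
       "[C1' = C1 - l*B1] (mod D1)" "[C2' = C2 - k*B2] (mod D2)" by (auto simp: v w rel_simp)
  have "[C1 = C1' - (-l)*B1'] (mod D1)"
  proof -
    have "[C1' - (-l)*B1' = (C1 - l*B1) - (-l)*B1'] (mod D1)" by (intro cong_diff kl cong_refl)
    also have "(C1 - l*B1) - (-l)*B1' = C1 + D1*(l*k)" by (simp add: kl algebra_simps)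
    also have "[\<dots> = C1] (mod D1)" by (rule cong_shift)
    finally show ?thesis by (rule cong_sym)
  qed
  moreover have "[C2 = C2' - (-k)*B2'] (mod D2)"
  proof -
    have "[C2' - (-k)*B2' = (C2 - k*B2) - (-k)*B2'] (mod D2)" by (intro cong_diff kl cong_refl)
    also have "(C2 - k*B2) - (-k)*B2' = C2 + D2*(k*l)" by (simp add: kl algebra_simps)
    also have "[\<dots> = C2] (mod D2)" by (rule cong_shift)
    finally show ?thesis by (rule cong_sym)
  qed
  moreover have "B1 = B1' + D1*(-k)" "B2 = B2' + D2*(-l)" by (simp_all add: kl)
  ultimately show ?thesis unfolding v w rel_simp by blast
qed

lemma rel_trans:
  assumes "rel D1 D2 u v" "rel D1 D2 v w" shows "rel D1 D2 u w"
proof -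
  obtain B1 C1 B2 C2 where u: "u = (B1,C1,B2,C2)" by (cases u) auto
  obtain B1' C1' B2' C2' where v: "v = (B1',C1',B2',C2')" by (cases v) auto
  obtain B1'' C1'' B2'' C2'' where w: "w = (B1'',C1'',B2'',C2'')" by (cases w) auto
  from assms(1) obtain k l where kl: "B1' = B1 + D1*k" "B2' = B2 + D2*l"
       "[C1' = C1 - l*B1] (mod D1)" "[C2' = C2 - k*B2] (mod D2)" by (auto simp: u v rel_simp)
  from assms(2) obtain k' l' where kl': "B1'' = B1' + D1*k'" "B2'' = B2' + D2*l'"
       "[C1'' = C1' - l'*B1'] (mod D1)" "[C2'' = C2' - k'*B2'] (mod D2)" by (auto simp: v w rel_simp)
  have "[C1'' = C1 - (l+l')*B1] (mod D1)"
  proof -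
    have "[C1'' = (C1 - l*B1) - l'*B1'] (mod D1)"
      using kl'(3) kl(3) by (meson cong_diff cong_refl cong_trans)
    also have "(C1 - l*B1) - l'*B1' = C1 - (l+l')*B1 + D1*(-l'*k)" by (simp add: kl algebra_simps)
    also have "[\<dots> = C1 - (l+l')*B1] (mod D1)" by (rule cong_shift)
    finally show ?thesis .
  qed
  moreover have "[C2'' = C2 - (k+k')*B2] (mod D2)"
  proof -
    have "[C2'' = (C2 - k*B2) - k'*B2'] (mod D2)"
      using kl'(4) kl(4) by (meson cong_diff cong_refl cong_trans)
    also have "(C2 - k*B2) - k'*B2' = C2 - (k+k')*B2 + D2*(-k'*l)" by (simp add: kl algebra_simps)
    also have "[\<dots> = C2 - (k+k')*B2] (mod D2)" by (rule cong_shift)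
    finally show ?thesis .
  qed
  moreover have "B1'' = B1 + D1*(k+k')" "B2'' = B2 + D2*(l+l')" by (simp_all add: kl kl' algebra_simps)
  ultimately show ?thesis by (auto simp: u w rel_simp)
qed

lemma rel_refl: "rel D1 D2 v v"
  by (cases v) (auto simp: rel_simp intro!: exI[of _ 0])

definition red :: "int \<Rightarrow> int \<Rightarrow> tup \<Rightarrow> tup" where
  "red D1 D2 = (\<lambda>(B1,C1,B2,C2). (B1 mod D1, (C1 + (B2 div D2) * (B1 mod D1)) mod D1,
       B2 mod D2, (C2 + (B1 div D1) * B2) mod D2))"

lemma red_rel: "rel D1 D2 v (red D1 D2 v)"
proof -
  obtain B1 C1 B2 C2 where v: "v = (B1,C1,B2,C2)" by (cases v) auto
  have e1: "B1 mod D1 = B1 + D1 * (- (B1 div D1))" by (simp add: minus_div_mult_eq_mod [symmetric] algebra_simps)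
  have e2: "B2 mod D2 = B2 + D2 * (- (B2 div D2))" by (simp add: minus_div_mult_eq_mod [symmetric] algebra_simps)
  have c1: "[(C1 + (B2 div D2) * (B1 mod D1)) mod D1 = C1 - (- (B2 div D2)) * B1] (mod D1)"
  proof -
    have "[(C1 + (B2 div D2) * (B1 mod D1)) mod D1 = C1 + (B2 div D2) * (B1 mod D1)] (mod D1)"
      by simp
    also have "[C1 + (B2 div D2) * (B1 mod D1) = C1 + (B2 div D2) * B1] (mod D1)"
      by (intro cong_add cong_mult cong_refl) (simp add: cong_def)
    finally show ?thesis by simp
  qed
  have c2: "[(C2 + (B1 div D1) * B2) mod D2 = C2 - (- (B1 div D1)) * B2] (mod D2)"
    by simp
  show ?thesis unfolding v red_def prod.case rel_simp
    by (rule exI[of _ "-(B1 div D1)"], rule exI[of _ "-(B2 div D2)"]) (intro conjI e1 e2 c1 c2)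
qed

lemma red_box: "D1 > 0 \<Longrightarrow> D2 > 0 \<Longrightarrow> red D1 D2 v \<in> box D1 D2"
  by (cases v) (auto simp: red_def box_def)

lemma box_rel_eq:
  assumes "v \<in> box D1 D2" "w \<in> box D1 D2" "rel D1 D2 v w"
  shows "v = w"
proof -
  obtain B1 C1 B2 C2 where v: "v = (B1,C1,B2,C2)" by (cases v) auto
  obtain B1' C1' B2' C2' where w: "w = (B1',C1',B2',C2')" by (cases w) auto
  from assms(3) obtain k l where kl: "B1' = B1 + D1*k" "B2' = B2 + D2*l"
       "[C1' = C1 - l*B1] (mod D1)" "[C2' = C2 - k*B2] (mod D2)" by (auto simp: v w rel_simp)
  have "[B1' = B1] (mod D1)" "[B2' = B2] (mod D2)" unfolding kl by (rule cong_shift)+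
  hence b: "B1' = B1" "B2' = B2" using assms(1,2) by (auto simp: v w box_def intro: cong_less_imp_eq_int)
  have "D1 > 0" "D2 > 0" using assms(1) by (auto simp: v box_def)
  hence "k = 0" "l = 0" using kl b by auto
  hence "[C1' = C1] (mod D1)" "[C2' = C2] (mod D2)" using kl(3,4) by auto
  hence "C1' = C1" "C2' = C2" using assms(1,2) by (auto simp: v w box_def intro: cong_less_imp_eq_int)
  thus ?thesis using b v w by simp
qed

lemma red_eq_of_rel:
  assumes "D1 > 0" "D2 > 0" "w \<in> box D1 D2" "rel D1 D2 v w"
  shows "red D1 D2 v = w"
  using box_rel_eq[OF red_box[OF assms(1,2)] assms(3)] rel_trans[OF rel_sym[OF red_rel] assms(4)]
  by blast



lemma PP_simp: "PP D1 D2 (B1,C1,B2,C2) \<longleftrightarrow> gcd (gcd B1 C1) D1 = 1 \<and> gcd (gcd B2 C2) D2 = 1 \<and>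
         [D1 * C2 + B1 * B2 + C1 * D2 = 0] (mod (D1 * D2))"
  by (simp add: PP_def)

lemma PP_mod1:
  assumes "PP D1 D2 (B1,C1,B2,C2)" shows "[B1*B2 + C1*D2 = 0] (mod D1)"
proof -
  have "[D1 * C2 + B1 * B2 + C1 * D2 = 0] (mod D1)"
    using assms by (auto simp: PP_simp intro: cong_modulus_mult)
  hence "D1 dvd D1 * C2 + (B1 * B2 + C1 * D2)" by (simp add: cong_0_iff add.assoc)
  hence "D1 dvd B1 * B2 + C1 * D2" using dvd_add_right_iff[of D1 "D1*C2"] by simp
  thus ?thesis by (simp add: cong_0_iff)
qed

lemma PP_mod2:
  assumes "PP D1 D2 (B1,C1,B2,C2)" shows "[B2*B1 + C2*D1 = 0] (mod D2)"
proof -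
  have "[D1 * C2 + B1 * B2 + C1 * D2 = 0] (mod D2)"
    using assms by (auto simp: PP_simp mult.commute[of D1 D2] intro: cong_modulus_mult)
  hence "D2 dvd D2 * C1 + (B2 * B1 + C2 * D1)" by (simp add: cong_0_iff algebra_simps)
  hence "D2 dvd B2 * B1 + C2 * D1" using dvd_add_right_iff[of D2 "D2*C1"] by simp
  thus ?thesis by (simp add: cong_0_iff)
qed

lemma um_shift:
  fixes Y Z B1 C1 B1' C1' D1 k l :: int
  assumes "[Y*B1 + Z*C1 = 1] (mod D1)" "B1' = B1 + D1*k" "[C1' = C1 - l*B1] (mod D1)"
  shows "[(Y + l*Z)*B1' + Z*C1' = 1] (mod D1)"
proof -
  have "[B1' = B1] (mod D1)" unfolding assms(2) by (rule cong_shift)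
  hence "[(Y + l*Z)*B1' + Z*C1' = (Y + l*Z)*B1 + Z*(C1 - l*B1)] (mod D1)"
    using assms(3) by (intro cong_add cong_mult cong_refl)
  also have "(Y + l*Z)*B1 + Z*(C1 - l*B1) = Y*B1 + Z*C1" by (simp add: algebra_simps)
  finally show ?thesis using assms(1) by (rule cong_trans)
qed

lemma PP_rel:
  assumes "PP D1 D2 v" "rel D1 D2 v w" shows "PP D1 D2 w"
proof -
  obtain B1 C1 B2 C2 where v: "v = (B1,C1,B2,C2)" by (cases v) auto
  obtain B1' C1' B2' C2' where w: "w = (B1',C1',B2',C2')" by (cases w) auto
  from assms(2) obtain k l where kl: "B1' = B1 + D1*k" "B2' = B2 + D2*l"
       "[C1' = C1 - l*B1] (mod D1)" "[C2' = C2 - k*B2] (mod D2)" by (auto simp: v w rel_simp)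
  from assms(1) have g1: "gcd (gcd B1 C1) D1 = 1" and g2: "gcd (gcd B2 C2) D2 = 1"
    and c: "[D1 * C2 + B1 * B2 + C1 * D2 = 0] (mod (D1 * D2))" by (auto simp: v PP_simp)
  from g1 obtain Y Z where "[Y*B1 + Z*C1 = 1] (mod D1)" by (auto simp: um_iff)
  from um_shift[OF this kl(1) kl(3)] have g1': "gcd (gcd B1' C1') D1 = 1" by (auto simp: um_iff)
  from g2 obtain Y Z where "[Y*B2 + Z*C2 = 1] (mod D2)" by (auto simp: um_iff)
  from um_shift[OF this kl(2) kl(4)] have g2': "gcd (gcd B2' C2') D2 = 1" by (auto simp: um_iff)
  obtain m where m: "C1' = C1 - l*B1 + D1*m" using cong_sym[OF kl(3)] unfolding cong_iff_lin by blast
  obtain n where n: "C2' = C2 - k*B2 + D2*n" using cong_sym[OF kl(4)] unfolding cong_iff_lin by blast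
  have "D1 * C2' + B1' * B2' + C1' * D2 = (D1 * C2 + B1 * B2 + C1 * D2) + (D1*D2)*(n + k*l + m)"
    by (simp add: m n kl algebra_simps)
  hence "[D1 * C2' + B1' * B2' + C1' * D2 = D1 * C2 + B1 * B2 + C1 * D2] (mod (D1*D2))"
    by (simp add: cong_shift)
  hence "[D1 * C2' + B1' * B2' + C1' * D2 = 0] (mod (D1*D2))" using c by (rule cong_trans)
  thus ?thesis using g1' g2' by (simp add: w PP_simp)
qed

lemma N1_rel:
  assumes "PP D1 D2 v" "rel D1 D2 v w" shows "[N1 D1 D2 w = N1 D1 D2 v] (mod D1)"
proof -
  obtain B1 C1 B2 C2 where v: "v = (B1,C1,B2,C2)" by (cases v) auto
  obtain B1' C1' B2' C2' where w: "w = (B1',C1',B2',C2')" by (cases w) auto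
  from assms(2) obtain k l where kl: "B1' = B1 + D1*k" "B2' = B2 + D2*l"
       "[C1' = C1 - l*B1] (mod D1)" "[C2' = C2 - k*B2] (mod D2)" by (auto simp: v w rel_simp)
  have Pw: "PP D1 D2 w" using PP_rel[OF assms] .
  from assms(1) obtain Y Z where YZ: "[Y*B1 + Z*C1 = 1] (mod D1)" by (auto simp: v PP_simp um_iff)
  have 1: "[N1 D1 D2 v = Y*D2 - Z*B2] (mod D1)"
    unfolding v by (rule N1_any[OF YZ PP_mod1[OF assms(1)[unfolded v]]])
  have 2: "[N1 D1 D2 w = (Y + l*Z)*D2 - Z*B2'] (mod D1)"
    unfolding w by (rule N1_any[OF um_shift[OF YZ kl(1) kl(3)] PP_mod1[OF Pw[unfolded w]]])
  have "(Y + l*Z)*D2 - Z*B2' = Y*D2 - Z*B2" by (simp add: kl algebra_simps)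
  thus ?thesis using 1 2 by (metis cong_sym cong_trans)
qed

lemma N2_rel:
  assumes "PP D1 D2 v" "rel D1 D2 v w" shows "[N2 D1 D2 w = N2 D1 D2 v] (mod D2)"
proof -
  obtain B1 C1 B2 C2 where v: "v = (B1,C1,B2,C2)" by (cases v) auto
  obtain B1' C1' B2' C2' where w: "w = (B1',C1',B2',C2')" by (cases w) auto
  from assms(2) obtain k l where kl: "B1' = B1 + D1*k" "B2' = B2 + D2*l"
       "[C1' = C1 - l*B1] (mod D1)" "[C2' = C2 - k*B2] (mod D2)" by (auto simp: v w rel_simp)
  have Pw: "PP D1 D2 w" using PP_rel[OF assms] .
  from assms(1) obtain Y Z where YZ: "[Y*B2 + Z*C2 = 1] (mod D2)" by (auto simp: v PP_simp um_iff)
  have 1: "[N2 D1 D2 v = Y*D1 - Z*B1] (mod D2)"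
    unfolding v by (rule N2_any[OF YZ PP_mod2[OF assms(1)[unfolded v]]])
  have 2: "[N2 D1 D2 w = (Y + k*Z)*D1 - Z*B1'] (mod D2)"
    unfolding w by (rule N2_any[OF um_shift[OF YZ kl(2) kl(4)] PP_mod2[OF Pw[unfolded w]]])
  have "(Y + k*Z)*D1 - Z*B1' = Y*D1 - Z*B1" by (simp add: kl algebra_simps)
  thus ?thesis using 1 2 by (metis cong_sym cong_trans)
qed

definition fG :: "int \<Rightarrow> int \<Rightarrow> int \<Rightarrow> int \<Rightarrow> int \<Rightarrow> int \<Rightarrow> tup \<Rightarrow> complex" where
  "fG D1 D2 a b u t v = (if [fst (snd (snd v)) = u] (mod D2) \<and> [N1 D1 D2 v = t] (mod D1)
      then ee (of_int (a * fst v) / of_int D1) * ee (of_int (b * N2 D1 D2 v) / of_int D2) else 0)"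

definition G :: "int \<Rightarrow> int \<Rightarrow> int \<Rightarrow> int \<Rightarrow> int \<Rightarrow> int \<Rightarrow> complex" where
  "G D1 D2 a b u t = (\<Sum>v \<in> Tset D1 D2. fG D1 D2 a b u t v)"

lemma fG_rel:
  assumes "PP D1 D2 v" "rel D1 D2 v w" "D1 \<noteq> 0" "D2 \<noteq> 0"
  shows "fG D1 D2 a b u t w = fG D1 D2 a b u t v"
proof -
  obtain B1 C1 B2 C2 where v: "v = (B1,C1,B2,C2)" by (cases v) auto
  obtain B1' C1' B2' C2' where w: "w = (B1',C1',B2',C2')" by (cases w) auto
  from assms(2) obtain k l where kl: "B1' = B1 + D1*k" "B2' = B2 + D2*l"
       by (auto simp: v w rel_simp)
  have b2: "[B2' = B2] (mod D2)" unfolding kl by (rule cong_shift)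
  have b1: "[a*B1' = a*B1] (mod D1)" unfolding kl by (intro cong_mult cong_refl cong_shift)
  have n1: "[N1 D1 D2 w = N1 D1 D2 v] (mod D1)" by (rule N1_rel[OF assms(1,2)])
  have n2: "[b * N2 D1 D2 w = b * N2 D1 D2 v] (mod D2)" by (intro cong_mult cong_refl N2_rel[OF assms(1,2)])
  have c1: "[B2' = u] (mod D2) \<longleftrightarrow> [B2 = u] (mod D2)" using b2 by (meson cong_sym cong_trans)
  have c2: "[N1 D1 D2 w = t] (mod D1) \<longleftrightarrow> [N1 D1 D2 v = t] (mod D1)" using n1 by (meson cong_sym cong_trans)
  show ?thesis unfolding fG_def using c1 c2 ee_cong[OF b1 assms(3)] ee_cong[OF n2 assms(4)]
    by (simp add: v w)
qed



lemma ee_swap: "p + q = r + s \<Longrightarrow> ee p * ee q = ee r * ee s"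
  by (metis ee_add)

lemma cong_dvd_sub: "[x = t] (mod (D::int)) \<longleftrightarrow> D dvd (x - t)"
  by (metis cong_iff_dvd_diff dvd_minus_iff minus_diff_eq)

lemma triple_swap:
  fixes P :: "'c \<Rightarrow> complex"
  shows "(\<Sum>x\<in>A. \<Sum>y\<in>B. \<Sum>v\<in>C. P v * (X v x * Y v y)) = (\<Sum>v\<in>C. P v * ((\<Sum>x\<in>A. X v x) * (\<Sum>y\<in>B. Y v y)))"
proof -
  have "(\<Sum>x\<in>A. \<Sum>y\<in>B. \<Sum>v\<in>C. P v * (X v x * Y v y)) = (\<Sum>x\<in>A. \<Sum>v\<in>C. \<Sum>y\<in>B. P v * (X v x * Y v y))"
    by (rule sum.cong[OF refl], rule sum.swap)
  also have "\<dots> = (\<Sum>v\<in>C. \<Sum>x\<in>A. \<Sum>y\<in>B. P v * (X v x * Y v y))" by (rule sum.swap)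
  also have "\<dots> = (\<Sum>v\<in>C. P v * ((\<Sum>x\<in>A. X v x) * (\<Sum>y\<in>B. Y v y)))"
  proof (rule sum.cong[OF refl])
    fix v show "(\<Sum>x\<in>A. \<Sum>y\<in>B. P v * (X v x * Y v y)) = P v * ((\<Sum>x\<in>A. X v x) * (\<Sum>y\<in>B. Y v y))"
      by (subst sum_product) (simp add: sum_distrib_left)
  qed
  finally show ?thesis .
qed

lemma hat_G:
  assumes "D1 > 0" "D2 > 0"
  shows "kl3_hat a u t 1 D1 D2 = G D1 D2 a 1 u t"
proof -
  define P where "P v = ee (of_int (a * fst v) / of_int D1) * ee (of_int (N2 D1 D2 v) / of_int D2)" for v :: tup
  define X where "X v x = ee (of_int (x * (N1 D1 D2 v - t)) / of_int D1)" for v :: tup and x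
  define Y where "Y v y = ee (of_int (y * (fst (snd (snd v)) - u)) / of_int D2)" for v :: tup and y
  have trm: "kl3 a y x 1 D1 D2 * ee (of_int (- x * t) / of_int D1) * ee (of_int (- y * u) / of_int D2)
      = (\<Sum>v\<in>Tset D1 D2. P v * (X v x * Y v y))" for x y
  proof -
    have "kl3 a y x 1 D1 D2 * ee (of_int (- x * t) / of_int D1) * ee (of_int (- y * u) / of_int D2)
      = (\<Sum>v\<in>Tset D1 D2. ee (of_int (a * fst v + x * N1 D1 D2 v) / of_int D1) *
      ee (of_int (y * fst (snd (snd v)) + 1 * N2 D1 D2 v) / of_int D2) *
       ee (of_int (- x * t) / of_int D1) * ee (of_int (- y * u) / of_int D2))"
      by (simp add: kl3_alt sum_distrib_right)
    also have "\<dots> = (\<Sum>v\<in>Tset D1 D2. P v * (X v x * Y v y))"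
    proof (rule sum.cong[OF refl])
      fix v
      have e1: "ee (of_int (a * fst v + x * N1 D1 D2 v) / of_int D1) * ee (of_int (- x * t) / of_int D1)
          = ee (of_int (a * fst v) / of_int D1) * X v x"
        unfolding X_def using assms by (intro ee_swap) (simp add: field_simps)
      have e2: "ee (of_int (y * fst (snd (snd v)) + 1 * N2 D1 D2 v) / of_int D2) * ee (of_int (- y * u) / of_int D2)
          = ee (of_int (N2 D1 D2 v) / of_int D2) * Y v y"
        unfolding Y_def using assms by (intro ee_swap) (simp add: field_simps)
      show "ee (of_int (a * fst v + x * N1 D1 D2 v) / of_int D1) *
      ee (of_int (y * fst (snd (snd v)) + 1 * N2 D1 D2 v) / of_int D2) *
       ee (of_int (- x * t) / of_int D1) * ee (of_int (- y * u) / of_int D2) = P v * (X v x * Y v y)"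
      proof -
        have "ee (of_int (a * fst v + x * N1 D1 D2 v) / of_int D1) *
      ee (of_int (y * fst (snd (snd v)) + 1 * N2 D1 D2 v) / of_int D2) *
       ee (of_int (- x * t) / of_int D1) * ee (of_int (- y * u) / of_int D2) =
         (ee (of_int (a * fst v + x * N1 D1 D2 v) / of_int D1) * ee (of_int (- x * t) / of_int D1)) *
         (ee (of_int (y * fst (snd (snd v)) + 1 * N2 D1 D2 v) / of_int D2) * ee (of_int (- y * u) / of_int D2))"
          by (simp only: mult_ac)
        also have "\<dots> = (ee (of_int (a * fst v) / of_int D1) * X v x) * (ee (of_int (N2 D1 D2 v) / of_int D2) * Y v y)"
          by (simp only: e1 e2)
        also have "\<dots> = P v * (X v x * Y v y)" by (simp only: P_def mult_ac)
        finally show ?thesis .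
      qed
    qed
    finally show ?thesis .
  qed
  have "kl3_hat a u t 1 D1 D2 = (1 / of_int (D1 * D2)) * 
     (\<Sum>x\<in>{0..<D1}. \<Sum>y\<in>{0..<D2}. \<Sum>v\<in>Tset D1 D2. P v * (X v x * Y v y))"
    unfolding kl3_hat_def by (simp only: trm)
  also have "\<dots> = (1 / of_int (D1 * D2)) * (\<Sum>v\<in>Tset D1 D2. P v * ((\<Sum>x\<in>{0..<D1}. X v x) * (\<Sum>y\<in>{0..<D2}. Y v y)))"
    by (simp only: triple_swap)
  also have "\<dots> = (1 / of_int (D1 * D2)) * (\<Sum>v\<in>Tset D1 D2. of_int (D1 * D2) * fG D1 D2 a 1 u t v)"
  proof -
    have "P v * ((\<Sum>x\<in>{0..<D1}. X v x) * (\<Sum>y\<in>{0..<D2}. Y v y)) = of_int (D1 * D2) * fG D1 D2 a 1 u t v" for v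
    proof -
      have sx: "(\<Sum>x\<in>{0..<D1}. X v x) = (if [N1 D1 D2 v = t] (mod D1) then of_int D1 else 0)"
        unfolding X_def using ee_orth[OF assms(1)] by (simp only: cong_dvd_sub)
      have sy: "(\<Sum>y\<in>{0..<D2}. Y v y) = (if [fst (snd (snd v)) = u] (mod D2) then of_int D2 else 0)"
        unfolding Y_def using ee_orth[OF assms(2)] by (simp only: cong_dvd_sub)
      show ?thesis unfolding sx sy fG_def P_def by simp
    qed
    thus ?thesis by simp
  qed
  also have "\<dots> = G D1 D2 a 1 u t"
    using assms by (simp add: G_def sum_distrib_left[symmetric])
  finally show ?thesis .
qed



definition phi :: "int \<Rightarrow> int \<Rightarrow> tup \<Rightarrow> tup" where
  "phi m1 m2 = (\<lambda>(B1,C1,B2,C2). (B1, m2*C1, B2, m1*C2))"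

lemma phi_simp[simp]: "phi m1 m2 (B1,C1,B2,C2) = (B1, m2*C1, B2, m1*C2)"
  by (simp add: phi_def)

lemma inv_exists:
  fixes e c :: int
  assumes "coprime e c" obtains i where "[e * i = 1] (mod c)"
  using assms by (metis coprime_iff_invertible_int)

lemma um_scale:
  fixes Y Z B C c e i :: int
  assumes YZ: "[Y*B + Z*C = 1] (mod c)" and i: "[e*i = 1] (mod c)"
  shows "[Y*B + (Z*i)*(e*C) = 1] (mod c)"
proof -
  have eq: "Y*B + (Z*i)*(e*C) = Y*B + (Z*C)*(e*i)" by (simp add: algebra_simps)
  have "[Y*B + (Z*i)*(e*C) = Y*B + (Z*C)*(e*i)] (mod c)" by (simp only: eq cong_refl)
  also have "[Y*B + (Z*C)*(e*i) = Y*B + (Z*C)*1] (mod c)" by (intro cong_add cong_mult cong_refl i)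
  also have "Y*B + (Z*C)*1 = Y*B + Z*C" by simp
  also note YZ
  finally show ?thesis .
qed

lemma phi_PP:
  assumes "PP (c1*e1) (c2*e2) v" "coprime e2 c1" "coprime e1 c2"
  shows "PP c1 c2 (phi e1 e2 v)"
proof -
  obtain B1 C1 B2 C2 where v: "v = (B1,C1,B2,C2)" by (cases v) auto
  from assms(1) have g1: "gcd (gcd B1 C1) (c1*e1) = 1" and g2: "gcd (gcd B2 C2) (c2*e2) = 1"
    and c: "[(c1*e1) * C2 + B1 * B2 + C1 * (c2*e2) = 0] (mod ((c1*e1) * (c2*e2)))" by (auto simp: v PP_simp)
  from g1 obtain Y Z where YZ: "[Y*B1 + Z*C1 = 1] (mod (c1*e1))" by (auto simp: um_iff)
  hence YZ': "[Y*B1 + Z*C1 = 1] (mod c1)" by (rule cong_modulus_mult)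
  obtain i where i: "[e2 * i = 1] (mod c1)" using inv_exists[OF assms(2)] .
  have "[Y*B1 + (Z*i)*(e2*C1) = 1] (mod c1)" by (rule um_scale[OF YZ' i])
  hence g1': "gcd (gcd B1 (e2*C1)) c1 = 1" unfolding um_iff by blast
  from g2 obtain Y Z where YZ: "[Y*B2 + Z*C2 = 1] (mod (c2*e2))" by (auto simp: um_iff)
  hence YZ2: "[Y*B2 + Z*C2 = 1] (mod c2)" by (rule cong_modulus_mult)
  obtain i where i: "[e1 * i = 1] (mod c2)" using inv_exists[OF assms(3)] .
  have "[Y*B2 + (Z*i)*(e1*C2) = 1] (mod c2)" by (rule um_scale[OF YZ2 i])
  hence g2': "gcd (gcd B2 (e1*C2)) c2 = 1" unfolding um_iff by blast
  have "[c1 * (e1*C2) + B1 * B2 + (e2*C1) * c2 = 0] (mod (c1 * c2))"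
  proof -
    have "c1 * c2 dvd (c1*e1) * (c2*e2)" by (simp add: mult_dvd_mono)
    from cong_dvd_modulus[OF c this] show ?thesis by (simp add: algebra_simps)
  qed
  thus ?thesis using g1' g2' by (simp add: v PP_simp)
qed


lemma phi_rel:
  assumes "rel (c1*e1) (c2*e2) v w"
  shows "rel c1 c2 (phi e1 e2 v) (phi e1 e2 w)"
proof -
  obtain B1 C1 B2 C2 where v: "v = (B1,C1,B2,C2)" by (cases v) auto
  obtain B1' C1' B2' C2' where w: "w = (B1',C1',B2',C2')" by (cases w) auto
  from assms obtain k l where kl: "B1' = B1 + (c1*e1)*k" "B2' = B2 + (c2*e2)*l"
       "[C1' = C1 - l*B1] (mod (c1*e1))" "[C2' = C2 - k*B2] (mod (c2*e2))" by (auto simp: v w rel_simp)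
  have "[e2*C1' = e2*(C1 - l*B1)] (mod c1)" using cong_modulus_mult[OF kl(3)] by (intro cong_mult cong_refl)
  hence 1: "[e2*C1' = e2*C1 - (e2*l)*B1] (mod c1)" by (simp add: algebra_simps)
  have "[e1*C2' = e1*(C2 - k*B2)] (mod c2)" using cong_modulus_mult[OF kl(4)] by (intro cong_mult cong_refl)
  hence 2: "[e1*C2' = e1*C2 - (e1*k)*B2] (mod c2)" by (simp add: algebra_simps)
  have 3: "B1' = B1 + c1*(e1*k)" "B2' = B2 + c2*(e2*l)" using kl by (simp_all add: algebra_simps)
  show ?thesis unfolding v w phi_simp rel_simp using 1 2 3 by blast
qed

lemma phi_N1:
  assumes "PP (c1*e1) (c2*e2) v" "coprime e2 c1" "coprime e1 c2"
  shows "[N1 (c1*e1) (c2*e2) v = e2 * N1 c1 c2 (phi e1 e2 v)] (mod c1)"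
proof -
  obtain B1 C1 B2 C2 where v: "v = (B1,C1,B2,C2)" by (cases v) auto
  from assms(1) obtain Y Z where YZ: "[Y*B1 + Z*C1 = 1] (mod (c1*e1))" by (auto simp: v PP_simp um_iff)
  have 1: "[N1 (c1*e1) (c2*e2) v = Y*(c2*e2) - Z*B2] (mod c1)"
    using N1_any[OF YZ PP_mod1[OF assms(1)[unfolded v]]] unfolding v by (rule cong_modulus_mult)
  obtain i where i: "[e2 * i = 1] (mod c1)" using inv_exists[OF assms(2)] .
  have P: "PP c1 c2 (B1, e2*C1, B2, e1*C2)" using phi_PP[OF assms] by (simp add: v)
  have 2: "[N1 c1 c2 (phi e1 e2 v) = Y*c2 - (Z*i)*B2] (mod c1)"
    unfolding v phi_simp by (rule N1_any[OF um_scale[OF cong_modulus_mult[OF YZ] i] PP_mod1[OF P]])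
  have "[e2 * N1 c1 c2 (phi e1 e2 v) = e2 * (Y*c2 - (Z*i)*B2)] (mod c1)" by (intro cong_mult cong_refl 2)
  also have "e2 * (Y*c2 - (Z*i)*B2) = Y*(c2*e2) - Z*B2*(e2*i)" by (simp add: algebra_simps)
  also have "[\<dots> = Y*(c2*e2) - Z*B2*1] (mod c1)" by (intro cong_diff cong_mult cong_refl i)
  finally have "[e2 * N1 c1 c2 (phi e1 e2 v) = Y*(c2*e2) - Z*B2] (mod c1)" by simp
  thus ?thesis using 1 by (metis cong_sym cong_trans)
qed

lemma phi_N2:
  assumes "PP (c1*e1) (c2*e2) v" "coprime e2 c1" "coprime e1 c2"
  shows "[N2 (c1*e1) (c2*e2) v = e1 * N2 c1 c2 (phi e1 e2 v)] (mod c2)"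
proof -
  obtain B1 C1 B2 C2 where v: "v = (B1,C1,B2,C2)" by (cases v) auto
  from assms(1) obtain Y Z where YZ: "[Y*B2 + Z*C2 = 1] (mod (c2*e2))" by (auto simp: v PP_simp um_iff)
  have 1: "[N2 (c1*e1) (c2*e2) v = Y*(c1*e1) - Z*B1] (mod c2)"
    using N2_any[OF YZ PP_mod2[OF assms(1)[unfolded v]]] unfolding v by (rule cong_modulus_mult)
  obtain i where i: "[e1 * i = 1] (mod c2)" using inv_exists[OF assms(3)] .
  have P: "PP c1 c2 (B1, e2*C1, B2, e1*C2)" using phi_PP[OF assms] by (simp add: v)
  have 2: "[N2 c1 c2 (phi e1 e2 v) = Y*c1 - (Z*i)*B1] (mod c2)"
    unfolding v phi_simp by (rule N2_any[OF um_scale[OF cong_modulus_mult[OF YZ] i] PP_mod2[OF P]])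
  have "[e1 * N2 c1 c2 (phi e1 e2 v) = e1 * (Y*c1 - (Z*i)*B1)] (mod c2)" by (intro cong_mult cong_refl 2)
  also have "e1 * (Y*c1 - (Z*i)*B1) = Y*(c1*e1) - Z*B1*(e1*i)" by (simp add: algebra_simps)
  also have "[\<dots> = Y*(c1*e1) - Z*B1*1] (mod c2)" by (intro cong_diff cong_mult cong_refl i)
  finally have "[e1 * N2 c1 c2 (phi e1 e2 v) = Y*(c1*e1) - Z*B1] (mod c2)" by simp
  thus ?thesis using 1 by (metis cong_sym cong_trans)
qed

lemma ee_split:
  fixes p q c e x :: int
  assumes "p*e + q*c = 1" "c \<noteq> 0" "e \<noteq> 0"
  shows "ee (of_int x / of_int (c*e)) = ee (of_int (p*x) / of_int c) * ee (of_int (q*x) / of_int e)"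
proof -
  have h: "real_of_int p * of_int e + of_int q * of_int c = 1"
  proof -
    have "real_of_int (p*e + q*c) = 1" using assms(1) by simp
    thus ?thesis by simp
  qed
  have "of_int (p*x) / of_int c + (of_int (q*x) / of_int e :: real) =
     of_int x * (real_of_int p * of_int e + of_int q * of_int c) / (of_int c * of_int e)"
    using assms(2,3) by (simp add: field_simps)
  also have "\<dots> = of_int x / of_int (c*e)" by (simp only: h) simp
  finally have "of_int x / of_int (c*e) = of_int (p*x) / of_int c + (of_int (q*x) / of_int e :: real)" by simp
  thus ?thesis by (simp add: ee_add)
qed

lemma cong_split:
  fixes m n x y :: int
  assumes "coprime m n"
  shows "[x = y] (mod (m*n)) \<longleftrightarrow> [x = y] (mod m) \<and> [x = y] (mod n)"
proof
  assume h: "[x = y] (mod (m*n))"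
  show "[x = y] (mod m) \<and> [x = y] (mod n)"
    using cong_dvd_modulus[OF h, of m] cong_dvd_modulus[OF h, of n] by simp
next
  assume "[x = y] (mod m) \<and> [x = y] (mod n)"
  thus "[x = y] (mod (m*n))" using coprime_cong_mult assms by blast
qed

lemma cong_inv_iff:
  fixes e i c x t :: int
  assumes "[e*i = 1] (mod c)"
  shows "[e*x = t] (mod c) \<longleftrightarrow> [x = i*t] (mod c)"
proof
  assume h: "[e*x = t] (mod c)"
  have "[(e*i)*x = 1*x] (mod c)" by (intro cong_mult cong_refl assms)
  hence "[x = (e*i)*x] (mod c)" by (simp add: cong_sym_eq)
  also have "(e*i)*x = i*(e*x)" by simp
  also have "[\<dots> = i*t] (mod c)" by (intro cong_mult cong_refl h)
  finally show "[x = i*t] (mod c)" .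
next
  assume h: "[x = i*t] (mod c)"
  have "[e*x = e*(i*t)] (mod c)" by (intro cong_mult cong_refl h)
  also have "e*(i*t) = (e*i)*t" by simp
  also have "[\<dots> = 1*t] (mod c)" by (intro cong_mult cong_refl assms)
  finally show "[e*x = t] (mod c)" by simp
qed



lemma phi_PP_g: "D1 = c1*e1 \<Longrightarrow> D2 = c2*e2 \<Longrightarrow> PP D1 D2 v \<Longrightarrow> coprime e2 c1 \<Longrightarrow> coprime e1 c2 \<Longrightarrow> PP c1 c2 (phi e1 e2 v)"
  using phi_PP by blast
lemma phi_rel_g: "D1 = c1*e1 \<Longrightarrow> D2 = c2*e2 \<Longrightarrow> rel D1 D2 v w \<Longrightarrow> rel c1 c2 (phi e1 e2 v) (phi e1 e2 w)"
  using phi_rel by blast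
lemma phi_N1_g: "D1 = c1*e1 \<Longrightarrow> D2 = c2*e2 \<Longrightarrow> PP D1 D2 v \<Longrightarrow> coprime e2 c1 \<Longrightarrow> coprime e1 c2 \<Longrightarrow>
   [N1 D1 D2 v = e2 * N1 c1 c2 (phi e1 e2 v)] (mod c1)"
  using phi_N1 by blast
lemma phi_N2_g: "D1 = c1*e1 \<Longrightarrow> D2 = c2*e2 \<Longrightarrow> PP D1 D2 v \<Longrightarrow> coprime e2 c1 \<Longrightarrow> coprime e1 c2 \<Longrightarrow>
   [N2 D1 D2 v = e1 * N2 c1 c2 (phi e1 e2 v)] (mod c2)"
  using phi_N2 by blast

locale crt4 =
  fixes c1 c2 e1 e2 D1 D2 :: int
  assumes pos: "c1 > 0" "c2 > 0" "e1 > 0" "e2 > 0"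
    and cop: "coprime (c1*c2) (e1*e2)"
    and D1: "D1 = c1*e1" and D2: "D2 = c2*e2"
begin

lemma cops: "coprime c1 e1" "coprime c1 e2" "coprime c2 e1" "coprime c2 e2"
   "coprime e1 c1" "coprime e2 c1" "coprime e1 c2" "coprime e2 c2"
  using cop by (auto simp: coprime_commute)

lemma D1': "D1 = e1*c1" and D2': "D2 = e2*c2" using D1 D2 by simp_all

lemma fG_factor:
  assumes P: "PP D1 D2 v" and pq1: "p1*e1 + q1*c1 = 1" and pq2: "p2*e2 + q2*c2 = 1"
    and i1: "[e2*i1 = 1] (mod c1)" and j1: "[c2*j1 = 1] (mod e1)"
  shows "fG D1 D2 a b u t v = fG c1 c2 (a*p1) (b*p2*e1) u (i1*t) (phi e1 e2 v) *
                              fG e1 e2 (a*q1) (b*q2*c1) u (j1*t) (phi c1 c2 v)"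
proof -
  obtain B1 C1 B2 C2 where v: "v = (B1,C1,B2,C2)" by (cases v) auto
  have nc1: "[N1 D1 D2 v = e2 * N1 c1 c2 (phi e1 e2 v)] (mod c1)" by (rule phi_N1_g[OF D1 D2 P cops(6,7)])
  have ne1: "[N1 D1 D2 v = c2 * N1 e1 e2 (phi c1 c2 v)] (mod e1)" by (rule phi_N1_g[OF D1' D2' P cops(3,2)])
  have nc2: "[N2 D1 D2 v = e1 * N2 c1 c2 (phi e1 e2 v)] (mod c2)" by (rule phi_N2_g[OF D1 D2 P cops(6,7)])
  have ne2: "[N2 D1 D2 v = c1 * N2 e1 e2 (phi c1 c2 v)] (mod e2)" by (rule phi_N2_g[OF D1' D2' P cops(3,2)])
  have cB: "[B2 = u] (mod D2) \<longleftrightarrow> [B2 = u] (mod c2) \<and> [B2 = u] (mod e2)"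
    unfolding D2 by (rule cong_split[OF cops(4)])
  have cN1: "[N1 D1 D2 v = t] (mod c1) \<longleftrightarrow> [N1 c1 c2 (phi e1 e2 v) = i1*t] (mod c1)"
  proof -
    have "[N1 D1 D2 v = t] (mod c1) \<longleftrightarrow> [e2 * N1 c1 c2 (phi e1 e2 v) = t] (mod c1)"
      using nc1 by (meson cong_sym cong_trans)
    thus ?thesis using cong_inv_iff[OF i1] by simp
  qed
  have cN2: "[N1 D1 D2 v = t] (mod e1) \<longleftrightarrow> [N1 e1 e2 (phi c1 c2 v) = j1*t] (mod e1)"
  proof -
    have "[N1 D1 D2 v = t] (mod e1) \<longleftrightarrow> [c2 * N1 e1 e2 (phi c1 c2 v) = t] (mod e1)"
      using ne1 by (meson cong_sym cong_trans)
    thus ?thesis using cong_inv_iff[OF j1] by simp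
  qed
  have cN: "[N1 D1 D2 v = t] (mod D1) \<longleftrightarrow> [N1 c1 c2 (phi e1 e2 v) = i1*t] (mod c1) \<and> [N1 e1 e2 (phi c1 c2 v) = j1*t] (mod e1)"
    unfolding D1 cong_split[OF cops(1)] using cN1 cN2 unfolding D1 by simp
  have ph1: "ee (of_int (a * B1) / of_int D1) = ee (of_int (a*p1 * B1) / of_int c1) * ee (of_int (a*q1 * B1) / of_int e1)"
    using ee_split[OF pq1, of "a*B1"] pos unfolding D1 by (simp add: mult_ac)
  have ph2: "ee (of_int (b * N2 D1 D2 v) / of_int D2) =
     ee (of_int (b*p2*e1 * N2 c1 c2 (phi e1 e2 v)) / of_int c2) * ee (of_int (b*q2*c1 * N2 e1 e2 (phi c1 c2 v)) / of_int e2)"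
  proof -
    have "ee (of_int (b * N2 D1 D2 v) / of_int D2) = ee (of_int (p2 * (b * N2 D1 D2 v)) / of_int c2) *
      ee (of_int (q2 * (b * N2 D1 D2 v)) / of_int e2)"
      using ee_split[OF pq2, of "b * N2 D1 D2 v"] pos unfolding D2 by simp
    moreover have "[p2 * (b * N2 D1 D2 v) = b*p2*e1 * N2 c1 c2 (phi e1 e2 v)] (mod c2)"
    proof -
      have "[p2 * (b * N2 D1 D2 v) = p2 * (b * (e1 * N2 c1 c2 (phi e1 e2 v)))] (mod c2)"
        by (intro cong_mult cong_refl nc2)
      thus ?thesis by (simp add: mult_ac)
    qed
    moreover have "[q2 * (b * N2 D1 D2 v) = b*q2*c1 * N2 e1 e2 (phi c1 c2 v)] (mod e2)"
    proof -
      have "[q2 * (b * N2 D1 D2 v) = q2 * (b * (c1 * N2 e1 e2 (phi c1 c2 v)))] (mod e2)"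
        by (intro cong_mult cong_refl ne2)
      thus ?thesis by (simp add: mult_ac)
    qed
    ultimately show ?thesis using ee_cong pos by (metis less_irrefl)
  qed
  show ?thesis unfolding fG_def using cB cN ph1 ph2 by (auto simp: v mult_ac)
qed

end



context crt4 begin

definition Phi :: "tup \<Rightarrow> tup \<times> tup" where
  "Phi v = (red c1 c2 (phi e1 e2 v), red e1 e2 (phi c1 c2 v))"

lemma Phi_into:
  assumes "v \<in> Tset D1 D2" shows "Phi v \<in> Tset c1 c2 \<times> Tset e1 e2"
proof -
  have P: "PP D1 D2 v" using assms by (simp add: Tset_alt)
  have "PP c1 c2 (phi e1 e2 v)" by (rule phi_PP_g[OF D1 D2 P cops(6,7)])
  hence 1: "PP c1 c2 (red c1 c2 (phi e1 e2 v))" using PP_rel red_rel by blast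
  have "PP e1 e2 (phi c1 c2 v)" by (rule phi_PP_g[OF D1' D2' P cops(3,2)])
  hence 2: "PP e1 e2 (red e1 e2 (phi c1 c2 v))" using PP_rel red_rel by blast
  show ?thesis using 1 2 red_box pos by (simp add: Phi_def Tset_alt)
qed

lemma rel_of_red_eq:
  assumes "red m1 m2 x = red m1 m2 y" shows "rel m1 m2 x y"
  using red_rel[of m1 m2 x] rel_sym[OF red_rel[of m1 m2 y]] assms by (metis rel_trans)

lemma box_eq_crt:
  fixes x y m n :: int
  assumes "coprime m n" "x \<in> {0..<m*n}" "y \<in> {0..<m*n}" "[x = y] (mod m)" "[x = y] (mod n)"
  shows "x = y"
proof -
  have "[x = y] (mod m*n)" using coprime_cong_mult[OF assms(4,5,1)] .
  thus ?thesis using assms(2,3) by (auto intro: cong_less_imp_eq_int)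
qed

lemma Phi_inj: "inj_on Phi (Tset D1 D2)"
proof (rule inj_onI)
  fix v w assume v: "v \<in> Tset D1 D2" and w: "w \<in> Tset D1 D2" and eq: "Phi v = Phi w"
  obtain B1 C1 B2 C2 where vv: "v = (B1,C1,B2,C2)" by (cases v) auto
  obtain B1' C1' B2' C2' where ww: "w = (B1',C1',B2',C2')" by (cases w) auto
  have "rel c1 c2 (phi e1 e2 v) (phi e1 e2 w)" using eq by (auto simp: Phi_def intro: rel_of_red_eq)
  then obtain k l where c: "B1' = B1 + c1*k" "B2' = B2 + c2*l"
       "[e2*C1' = e2*C1 - l*B1] (mod c1)" "[e1*C2' = e1*C2 - k*B2] (mod c2)"
    by (auto simp: vv ww rel_simp)
  have "rel e1 e2 (phi c1 c2 v) (phi c1 c2 w)" using eq by (auto simp: Phi_def intro: rel_of_red_eq)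
  then obtain k' l' where e: "B1' = B1 + e1*k'" "B2' = B2 + e2*l'"
       "[c2*C1' = c2*C1 - l'*B1] (mod e1)" "[c1*C2' = c1*C2 - k'*B2] (mod e2)"
    by (auto simp: vv ww rel_simp)
  have bx: "B1 \<in> {0..<c1*e1}" "B1' \<in> {0..<c1*e1}" "C1 \<in> {0..<c1*e1}" "C1' \<in> {0..<c1*e1}"
     "B2 \<in> {0..<c2*e2}" "B2' \<in> {0..<c2*e2}" "C2 \<in> {0..<c2*e2}" "C2' \<in> {0..<c2*e2}"
    using v w by (auto simp: vv ww Tset_def D1 D2)
  have "[B1' = B1] (mod c1)" unfolding c(1) by (rule cong_shift)
  moreover have "[B1' = B1] (mod e1)" unfolding e(1) by (rule cong_shift)
  ultimately have b1: "B1' = B1" by (rule box_eq_crt[OF cops(1) bx(2,1)])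
  have "[B2' = B2] (mod c2)" unfolding c(2) by (rule cong_shift)
  moreover have "[B2' = B2] (mod e2)" unfolding e(2) by (rule cong_shift)
  ultimately have b2: "B2' = B2" by (rule box_eq_crt[OF cops(4) bx(6,5)])
  have kl: "k = 0" "l = 0" "k' = 0" "l' = 0" using b1 b2 c e pos by auto
  have "[e2*C1' = e2*C1] (mod c1)" using c(3) kl by simp
  hence 1: "[C1' = C1] (mod c1)" using cong_mult_lcancel[OF cops(6)] by blast
  have "[c2*C1' = c2*C1] (mod e1)" using e(3) kl by simp
  hence 2: "[C1' = C1] (mod e1)" using cong_mult_lcancel[OF cops(3)] by blast
  have "[e1*C2' = e1*C2] (mod c2)" using c(4) kl by simp
  hence 3: "[C2' = C2] (mod c2)" using cong_mult_lcancel[OF cops(7)] by blast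
  have "[c1*C2' = c1*C2] (mod e2)" using e(4) kl by simp
  hence 4: "[C2' = C2] (mod e2)" using cong_mult_lcancel[OF cops(2)] by blast
  have "C1' = C1" by (rule box_eq_crt[OF cops(1) bx(4,3) 1 2])
  moreover have "C2' = C2" by (rule box_eq_crt[OF cops(4) bx(8,7) 3 4])
  ultimately show "v = w" using b1 b2 by (simp add: vv ww)
qed


lemma um_crt:
  fixes m n B C x y Y Z Y' Z' :: int
  assumes "coprime m n" "[Y*B + Z*(x*C) = 1] (mod m)" "[Y'*B + Z'*(y*C) = 1] (mod n)"
  shows "gcd (gcd B C) (m*n) = 1"
proof -
  obtain Ys where Ys: "[Ys = Y] (mod m)" "[Ys = Y'] (mod n)" using binary_chinese_remainder_int[OF assms(1)] by blast
  obtain Zs where Zs: "[Zs = Z*x] (mod m)" "[Zs = Z'*y] (mod n)" using binary_chinese_remainder_int[OF assms(1)] by blast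
  have "[Ys*B + Zs*C = Y*B + (Z*x)*C] (mod m)" by (intro cong_add cong_mult cong_refl Ys Zs)
  also have "Y*B + (Z*x)*C = Y*B + Z*(x*C)" by simp
  finally have 1: "[Ys*B + Zs*C = 1] (mod m)" using assms(2) by (rule cong_trans)
  have "[Ys*B + Zs*C = Y'*B + (Z'*y)*C] (mod n)" by (intro cong_add cong_mult cong_refl Ys Zs)
  also have "Y'*B + (Z'*y)*C = Y'*B + Z'*(y*C)" by simp
  finally have 2: "[Ys*B + Zs*C = 1] (mod n)" using assms(3) by (rule cong_trans)
  have "[Ys*B + Zs*C = 1] (mod (m*n))" using 1 2 cong_split[OF assms(1)] by blast
  thus ?thesis unfolding um_iff by blast
qed

lemma crt_obtain:
  fixes m n a b :: int
  assumes "coprime m n" obtains x where "[x = a] (mod m)" "[x = b] (mod n)"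
  using binary_chinese_remainder_int[OF assms] by blast

lemma lin_obtain:
  fixes x a m :: int
  assumes "[x = a] (mod m)" obtains k where "a = x + m*k"
  using assms unfolding cong_iff_lin by blast

lemma inv_rel:
  fixes e i c C d l B :: int
  assumes "[e*i = 1] (mod c)" "[C = i*(d + l*B)] (mod c)"
  shows "[d = e*C - l*B] (mod c)"
proof -
  have "[e*C = d + l*B] (mod c)" using cong_inv_iff[OF assms(1)] assms(2) by blast
  hence "[e*C - l*B = (d + l*B) - l*B] (mod c)" by (intro cong_diff cong_refl)
  thus ?thesis by (simp add: cong_sym_eq)
qed

lemma Phi_surj:
  assumes s: "\<sigma> \<in> Tset c1 c2" and r: "\<rho> \<in> Tset e1 e2"
  shows "\<exists>v \<in> Tset D1 D2. Phi v = (\<sigma>, \<rho>)"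
proof -
  obtain b1 d1 b2 d2 where ss: "\<sigma> = (b1,d1,b2,d2)" by (cases \<sigma>) auto
  obtain b1' d1' b2' d2' where rr: "\<rho> = (b1',d1',b2',d2')" by (cases \<rho>) auto
  have Ps: "PP c1 c2 \<sigma>" and Pr: "PP e1 e2 \<rho>" using s r by (auto simp: Tset_alt)
  obtain B1 where B1: "[B1 = b1] (mod c1)" "[B1 = b1'] (mod e1)" using crt_obtain[OF cops(1)] by blast
  obtain B2 where B2: "[B2 = b2] (mod c2)" "[B2 = b2'] (mod e2)" using crt_obtain[OF cops(4)] by blast
  obtain k where k: "b1 = B1 + c1*k" using lin_obtain[OF B1(1)] .
  obtain k' where k': "b1' = B1 + e1*k'" using lin_obtain[OF B1(2)] .
  obtain l where l: "b2 = B2 + c2*l" using lin_obtain[OF B2(1)] .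
  obtain l' where l': "b2' = B2 + e2*l'" using lin_obtain[OF B2(2)] .
  obtain i1 where i1: "[e2*i1 = 1] (mod c1)" using inv_exists[OF cops(6)] .
  obtain j1 where j1: "[c2*j1 = 1] (mod e1)" using inv_exists[OF cops(3)] .
  obtain i2 where i2: "[e1*i2 = 1] (mod c2)" using inv_exists[OF cops(7)] .
  obtain j2 where j2: "[c1*j2 = 1] (mod e2)" using inv_exists[OF cops(2)] .
  obtain C1 where C1: "[C1 = i1*(d1 + l*B1)] (mod c1)" "[C1 = j1*(d1' + l'*B1)] (mod e1)"
    using crt_obtain[OF cops(1)] by blast
  obtain C2 where C2: "[C2 = i2*(d2 + k*B2)] (mod c2)" "[C2 = j2*(d2' + k'*B2)] (mod e2)"
    using crt_obtain[OF cops(4)] by blast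
  define w where "w = (B1,C1,B2,C2)"
  have rc: "rel c1 c2 (phi e1 e2 w) \<sigma>"
    unfolding w_def ss phi_simp rel_simp by (rule exI[of _ k], rule exI[of _ l]) (intro conjI k l inv_rel[OF i1 C1(1)] inv_rel[OF i2 C2(1)])
  have re: "rel e1 e2 (phi c1 c2 w) \<rho>"
    unfolding w_def rr phi_simp rel_simp by (rule exI[of _ k'], rule exI[of _ l']) (intro conjI k' l' inv_rel[OF j1 C1(2)] inv_rel[OF j2 C2(2)])
  have Pc: "PP c1 c2 (B1, e2*C1, B2, e1*C2)" using PP_rel[OF Ps rel_sym[OF rc]] by (simp add: w_def)
  have Pe: "PP e1 e2 (B1, c2*C1, B2, c1*C2)" using PP_rel[OF Pr rel_sym[OF re]] by (simp add: w_def)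
  have g1: "gcd (gcd B1 C1) D1 = 1"
  proof -
    obtain Y Z where "[Y*B1 + Z*(e2*C1) = 1] (mod c1)" using Pc by (auto simp: PP_simp um_iff)
    moreover obtain Y' Z' where "[Y'*B1 + Z'*(c2*C1) = 1] (mod e1)" using Pe by (auto simp: PP_simp um_iff)
    ultimately show ?thesis unfolding D1 by (rule um_crt[OF cops(1)])
  qed
  have g2: "gcd (gcd B2 C2) D2 = 1"
  proof -
    obtain Y Z where "[Y*B2 + Z*(e1*C2) = 1] (mod c2)" using Pc by (auto simp: PP_simp um_iff)
    moreover obtain Y' Z' where "[Y'*B2 + Z'*(c1*C2) = 1] (mod e2)" using Pe by (auto simp: PP_simp um_iff)
    ultimately show ?thesis unfolding D2 by (rule um_crt[OF cops(4)])
  qed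
  have cc: "[D1 * C2 + B1 * B2 + C1 * D2 = 0] (mod (D1 * D2))"
  proof -
    have "[c1 * (e1*C2) + B1 * B2 + (e2*C1) * c2 = 0] (mod (c1*c2))" using Pc by (simp add: PP_simp)
    moreover have "c1 * (e1*C2) + B1 * B2 + (e2*C1) * c2 = D1 * C2 + B1 * B2 + C1 * D2"
      by (simp add: D1 D2 algebra_simps)
    ultimately have 1: "[D1 * C2 + B1 * B2 + C1 * D2 = 0] (mod (c1*c2))" by simp
    have "[e1 * (c1*C2) + B1 * B2 + (c2*C1) * e2 = 0] (mod (e1*e2))" using Pe by (simp add: PP_simp)
    moreover have "e1 * (c1*C2) + B1 * B2 + (c2*C1) * e2 = D1 * C2 + B1 * B2 + C1 * D2"
      by (simp add: D1 D2 algebra_simps)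
    ultimately have 2: "[D1 * C2 + B1 * B2 + C1 * D2 = 0] (mod (e1*e2))" by simp
    have "[D1 * C2 + B1 * B2 + C1 * D2 = 0] (mod ((c1*c2)*(e1*e2)))" using 1 2 cong_split[OF cop] by blast
    moreover have "(c1*c2)*(e1*e2) = D1 * D2" by (simp add: D1 D2 mult_ac)
    ultimately show ?thesis by simp
  qed
  have Pw: "PP D1 D2 w" using g1 g2 cc by (simp add: w_def PP_simp)
  define v where "v = red D1 D2 w"
  have D0: "D1 > 0" "D2 > 0" using pos by (simp_all add: D1 D2)
  have vT: "v \<in> Tset D1 D2" unfolding v_def Tset_alt using red_box[OF D0] PP_rel[OF Pw red_rel] by simp
  have wv: "rel D1 D2 w v" unfolding v_def by (rule red_rel)
  have "rel c1 c2 (phi e1 e2 v) \<sigma>"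
    using rel_trans[OF rel_sym[OF phi_rel_g[OF D1 D2 wv]] rc] .
  moreover have "\<sigma> \<in> box c1 c2" using s by (simp add: Tset_alt)
  ultimately have 1: "red c1 c2 (phi e1 e2 v) = \<sigma>"
    using red_eq_of_rel[OF pos(1) pos(2)] by blast
  have "rel e1 e2 (phi c1 c2 v) \<rho>"
    using rel_trans[OF rel_sym[OF phi_rel_g[OF D1' D2' wv]] re] .
  moreover have "\<rho> \<in> box e1 e2" using r by (simp add: Tset_alt)
  ultimately have 2: "red e1 e2 (phi c1 c2 v) = \<rho>"
    using red_eq_of_rel[OF pos(3) pos(4)] by blast
  have "Phi v = (\<sigma>, \<rho>)" using 1 2 by (simp add: Phi_def)
  thus ?thesis using vT by blast
qed

lemma Phi_bij: "bij_betw Phi (Tset D1 D2) (Tset c1 c2 \<times> Tset e1 e2)"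
  unfolding bij_betw_def
proof
  show "inj_on Phi (Tset D1 D2)" by (rule Phi_inj)
  show "Phi ` Tset D1 D2 = Tset c1 c2 \<times> Tset e1 e2"
  proof
    show "Phi ` Tset D1 D2 \<subseteq> Tset c1 c2 \<times> Tset e1 e2" using Phi_into by blast
    show "Tset c1 c2 \<times> Tset e1 e2 \<subseteq> Phi ` Tset D1 D2"
    proof
      fix x assume "x \<in> Tset c1 c2 \<times> Tset e1 e2"
      then obtain \<sigma> \<rho> where x: "x = (\<sigma>, \<rho>)" "\<sigma> \<in> Tset c1 c2" "\<rho> \<in> Tset e1 e2" by blast
      from Phi_surj[OF x(2,3)] show "x \<in> Phi ` Tset D1 D2" unfolding x(1) by (metis image_eqI)
    qed
  qed
qed

end


lemma fG_cong:
  assumes "[a = a'] (mod D1)" "[b = b'] (mod D2)" "[u = u'] (mod D2)" "[t = t'] (mod D1)" "D1 \<noteq> 0" "D2 \<noteq> 0"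
  shows "fG D1 D2 a b u t v = fG D1 D2 a' b' u' t' v"
proof -
  have 1: "[fst (snd (snd v)) = u] (mod D2) \<longleftrightarrow> [fst (snd (snd v)) = u'] (mod D2)"
    using assms(3) by (meson cong_sym cong_trans)
  have 2: "[N1 D1 D2 v = t] (mod D1) \<longleftrightarrow> [N1 D1 D2 v = t'] (mod D1)"
    using assms(4) by (meson cong_sym cong_trans)
  have 3: "ee (of_int (a * fst v) / of_int D1) = ee (of_int (a' * fst v) / of_int D1)"
    by (rule ee_cong[OF _ assms(5)]) (intro cong_mult cong_refl assms(1))
  have 4: "ee (of_int (b * N2 D1 D2 v) / of_int D2) = ee (of_int (b' * N2 D1 D2 v) / of_int D2)"
    by (rule ee_cong[OF _ assms(6)]) (intro cong_mult cong_refl assms(2))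
  show ?thesis unfolding fG_def using 1 2 3 4 by simp
qed

lemma G_cong:
  assumes "[a = a'] (mod D1)" "[b = b'] (mod D2)" "[u = u'] (mod D2)" "[t = t'] (mod D1)" "D1 \<noteq> 0" "D2 \<noteq> 0"
  shows "G D1 D2 a b u t = G D1 D2 a' b' u' t'"
  unfolding G_def using fG_cong[OF assms] by simp

lemma fG_red:
  assumes "PP D1 D2 x" "D1 > 0" "D2 > 0"
  shows "fG D1 D2 a b u t (red D1 D2 x) = fG D1 D2 a b u t x"
  using fG_rel[OF assms(1) red_rel] assms by simp

definition FF :: "int \<Rightarrow> int \<Rightarrow> int \<Rightarrow> int \<Rightarrow> int \<Rightarrow> real" where
  "FF D1 D2 a b t = (\<Sum>u\<in>{0..<D2}. cmod (G D1 D2 a b u t))"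

context crt4 begin

lemma G_mult:
  assumes pq1: "p1*e1 + q1*c1 = 1" and pq2: "p2*e2 + q2*c2 = 1"
    and i1: "[e2*i1 = 1] (mod c1)" and j1: "[c2*j1 = 1] (mod e1)"
  shows "G D1 D2 a b u t = G c1 c2 (a*p1) (b*p2*e1) u (i1*t) * G e1 e2 (a*q1) (b*q2*c1) u (j1*t)"
proof -
  define fc where "fc = fG c1 c2 (a*p1) (b*p2*e1) u (i1*t)"
  define fe where "fe = fG e1 e2 (a*q1) (b*q2*c1) u (j1*t)"
  have "G D1 D2 a b u t = (\<Sum>v\<in>Tset D1 D2. fc (phi e1 e2 v) * fe (phi c1 c2 v))"
    unfolding G_def fc_def fe_def
    by (rule sum.cong[OF refl], rule fG_factor[OF _ pq1 pq2 i1 j1]) (simp add: Tset_alt)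
  also have "\<dots> = (\<Sum>v\<in>Tset D1 D2. (\<lambda>(x,y). fc x * fe y) (Phi v))"
  proof (rule sum.cong[OF refl])
    fix v assume "v \<in> Tset D1 D2"
    hence P: "PP D1 D2 v" by (simp add: Tset_alt)
    have "fc (red c1 c2 (phi e1 e2 v)) = fc (phi e1 e2 v)"
      unfolding fc_def by (rule fG_red[OF phi_PP_g[OF D1 D2 P cops(6,7)] pos(1,2)])
    moreover have "fe (red e1 e2 (phi c1 c2 v)) = fe (phi c1 c2 v)"
      unfolding fe_def by (rule fG_red[OF phi_PP_g[OF D1' D2' P cops(3,2)] pos(3,4)])
    ultimately show "fc (phi e1 e2 v) * fe (phi c1 c2 v) = (\<lambda>(x,y). fc x * fe y) (Phi v)"
      by (simp add: Phi_def)
  qed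
  also have "\<dots> = (\<Sum>z\<in>Tset c1 c2 \<times> Tset e1 e2. (\<lambda>(x,y). fc x * fe y) z)"
    by (rule sum.reindex_bij_betw[OF Phi_bij])
  also have "\<dots> = (\<Sum>x\<in>Tset c1 c2. fc x) * (\<Sum>y\<in>Tset e1 e2. fe y)"
    by (simp add: sum_product sum.cartesian_product)
  finally show ?thesis unfolding G_def fc_def fe_def .
qed

lemma mod_pair_bij: "bij_betw (\<lambda>u. (u mod c2, u mod e2)) {0..<D2} ({0..<c2} \<times> {0..<e2})"
proof -
  have inj: "inj_on (\<lambda>u. (u mod c2, u mod e2)) {0..<D2}"
  proof (rule inj_onI)
    fix x y assume x: "x \<in> {0..<D2}" and y: "y \<in> {0..<D2}" and eq: "(x mod c2, x mod e2) = (y mod c2, y mod e2)"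
    have "[x = y] (mod c2)" "[x = y] (mod e2)" using eq by (auto simp: cong_def)
    thus "x = y" using box_eq_crt[OF cops(4)] x y by (simp add: D2)
  qed
  have sub: "(\<lambda>u. (u mod c2, u mod e2)) ` {0..<D2} \<subseteq> {0..<c2} \<times> {0..<e2}" using pos by auto
  have "card ((\<lambda>u. (u mod c2, u mod e2)) ` {0..<D2}) = card ({0..<c2} \<times> {0..<e2})"
    using card_image[OF inj] pos by (simp add: D2 card_cartesian_product nat_mult_distrib)
  hence "(\<lambda>u. (u mod c2, u mod e2)) ` {0..<D2} = {0..<c2} \<times> {0..<e2}"
    using card_subset_eq[OF _ sub] by simp
  thus ?thesis using inj by (simp add: bij_betw_def)
qed

lemma FF_mult:
  assumes pq1: "p1*e1 + q1*c1 = 1" and pq2: "p2*e2 + q2*c2 = 1"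
    and i1: "[e2*i1 = 1] (mod c1)" and j1: "[c2*j1 = 1] (mod e1)"
  shows "FF D1 D2 a b t = FF c1 c2 (a*p1) (b*p2*e1) (i1*t) * FF e1 e2 (a*q1) (b*q2*c1) (j1*t)"
proof -
  define gc where "gc u = cmod (G c1 c2 (a*p1) (b*p2*e1) u (i1*t))" for u
  define ge where "ge u = cmod (G e1 e2 (a*q1) (b*q2*c1) u (j1*t))" for u
  have "FF D1 D2 a b t = (\<Sum>u\<in>{0..<D2}. (\<lambda>(x,y). gc x * ge y) (u mod c2, u mod e2))"
    unfolding FF_def
  proof (rule sum.cong[OF refl])
    fix u
    have "G c1 c2 (a*p1) (b*p2*e1) u (i1*t) = G c1 c2 (a*p1) (b*p2*e1) (u mod c2) (i1*t)"
      using pos by (intro G_cong) (auto simp: cong_def)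
    moreover have "G e1 e2 (a*q1) (b*q2*c1) u (j1*t) = G e1 e2 (a*q1) (b*q2*c1) (u mod e2) (j1*t)"
      using pos by (intro G_cong) (auto simp: cong_def)
    ultimately show "cmod (G D1 D2 a b u t) = (\<lambda>(x,y). gc x * ge y) (u mod c2, u mod e2)"
      by (simp add: G_mult[OF assms] gc_def ge_def norm_mult)
  qed
  also have "\<dots> = (\<Sum>z\<in>{0..<c2} \<times> {0..<e2}. (\<lambda>(x,y). gc x * ge y) z)"
    by (rule sum.reindex_bij_betw[OF mod_pair_bij])
  also have "\<dots> = (\<Sum>x\<in>{0..<c2}. gc x) * (\<Sum>y\<in>{0..<e2}. ge y)"
    by (simp add: sum_product sum.cartesian_product)
  finally show ?thesis unfolding FF_def gc_def ge_def .
qed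

end


lemma not_coprime_prime:
  fixes a b :: int
  assumes "\<not> coprime a b" obtains p where "prime p" "p dvd a" "p dvd b"
proof -
  have "\<bar>gcd a b\<bar> \<noteq> 1" using assms by (simp add: coprime_iff_gcd_eq_1)
  then obtain p where "prime p" "p dvd gcd a b" using prime_factor_int by blast
  thus ?thesis using that by simp
qed

lemma unit_lift:
  fixes g M N :: int
  assumes "coprime g M" "N \<noteq> 0"
  obtains \<gamma> where "[\<gamma> = g] (mod M)" "coprime \<gamma> N"
proof -
  define S where "S = {p \<in> prime_factors N. \<not> p dvd g}"
  define x where "x = \<Prod>S"
  have fS: "finite S" unfolding S_def by simp
  have "coprime (g + M*x) N"
  proof (rule ccontr)
    assume "\<not> coprime (g + M*x) N"
    then obtain p where p: "prime p" "p dvd g + M*x" "p dvd N" by (rule not_coprime_prime)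
    have pN: "p \<in> prime_factors N" using p assms(2) by (simp add: in_prime_factors_iff)
    show False
    proof (cases "p dvd g")
      case True
      have "\<not> p dvd M"
      proof
        assume "p dvd M"
        hence "is_unit p" using True assms(1) by (meson coprime_common_divisor)
        thus False using prime_gt_1_int[OF p(1)] by simp
      qed
      moreover have "\<not> p dvd x"
      proof
        assume "p dvd x"
        then obtain q where q: "q \<in> S" "p dvd q" using prime_dvd_prod_iff[OF fS p(1)] unfolding x_def by auto
        have "prime q" "\<not> q dvd g" using q(1) by (auto simp: S_def in_prime_factors_iff)
        hence "p = q" using primes_dvd_imp_eq[OF p(1) _ q(2)] by simp
        thus False using True \<open>\<not> q dvd g\<close> by simp
      qed
      ultimately have "\<not> p dvd M*x" using prime_dvd_mult_iff[OF p(1)] by simp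
      moreover have "p dvd M*x" using p(2) True by (metis add_diff_cancel_left' dvd_diff)
      ultimately show False by simp
    next
      case False
      hence "p \<in> S" using pN by (simp add: S_def)
      hence "p dvd x" unfolding x_def using dvd_prodI[OF fS, of p "\<lambda>x. x"] by simp
      hence "p dvd M*x" by simp
      hence "p dvd g" using p(2) by (metis add_diff_cancel_right' dvd_diff)
      thus False using False by simp
    qed
  qed
  moreover have "[g + M*x = g] (mod M)" by (rule cong_shift)
  ultimately show ?thesis using that by blast
qed

definition sc :: "int \<Rightarrow> tup \<Rightarrow> tup" where
  "sc \<gamma> = (\<lambda>(B1,C1,B2,C2). (B1, \<gamma>*C1, \<gamma>*B2, \<gamma>*C2))"

lemma sc_simp[simp]: "sc \<gamma> (B1,C1,B2,C2) = (B1, \<gamma>*C1, \<gamma>*B2, \<gamma>*C2)"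
  by (simp add: sc_def)

locale scal =
  fixes D1 D2 \<gamma> b :: int
  assumes pos: "D1 > 0" "D2 > 0" and cg1: "coprime \<gamma> D1" and gb: "[\<gamma>*b = 1] (mod D2)"
begin

lemma cg2: "coprime \<gamma> D2"
  using gb coprime_iff_invertible_int by blast

lemma sc_PP:
  assumes P: "PP D1 D2 v" shows "PP D1 D2 (sc \<gamma> v)"
proof -
  obtain B1 C1 B2 C2 where v: "v = (B1,C1,B2,C2)" by (cases v) auto
  from P have g1: "gcd (gcd B1 C1) D1 = 1" and g2: "gcd (gcd B2 C2) D2 = 1"
    and c: "[D1 * C2 + B1 * B2 + C1 * D2 = 0] (mod (D1 * D2))" by (auto simp: v PP_simp)
  obtain g where g: "[\<gamma>*g = 1] (mod D1)" using inv_exists[OF cg1] .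
  from g1 obtain Y Z where "[Y*B1 + Z*C1 = 1] (mod D1)" by (auto simp: um_iff)
  from um_scale[OF this g] have g1': "gcd (gcd B1 (\<gamma>*C1)) D1 = 1" unfolding um_iff by blast
  from g2 obtain Y Z where YZ: "[Y*B2 + Z*C2 = 1] (mod D2)" by (auto simp: um_iff)
  have "(Y*b)*(\<gamma>*B2) + (Z*b)*(\<gamma>*C2) = (\<gamma>*b)*(Y*B2 + Z*C2)" by (simp add: algebra_simps)
  moreover have "[(\<gamma>*b)*(Y*B2 + Z*C2) = 1*1] (mod D2)" by (intro cong_mult gb YZ)
  ultimately have "[(Y*b)*(\<gamma>*B2) + (Z*b)*(\<gamma>*C2) = 1] (mod D2)" by simp
  hence g2': "gcd (gcd (\<gamma>*B2) (\<gamma>*C2)) D2 = 1" unfolding um_iff by blast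
  have "D1 * (\<gamma>*C2) + B1 * (\<gamma>*B2) + (\<gamma>*C1) * D2 = \<gamma> * (D1 * C2 + B1 * B2 + C1 * D2)"
    by (simp add: algebra_simps)
  moreover have "[\<gamma> * (D1 * C2 + B1 * B2 + C1 * D2) = \<gamma> * 0] (mod (D1*D2))" by (intro cong_mult cong_refl c)
  ultimately have "[D1 * (\<gamma>*C2) + B1 * (\<gamma>*B2) + (\<gamma>*C1) * D2 = 0] (mod (D1*D2))" by simp
  thus ?thesis using g1' g2' by (simp add: v PP_simp)
qed

lemma sc_fG:
  assumes P: "PP D1 D2 v"
  shows "fG D1 D2 a 1 (\<gamma>*u) t (sc \<gamma> v) = fG D1 D2 a b u t v"
proof -
  obtain B1 C1 B2 C2 where v: "v = (B1,C1,B2,C2)" by (cases v) auto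
  have P': "PP D1 D2 (B1, \<gamma>*C1, \<gamma>*B2, \<gamma>*C2)" using sc_PP[OF P] by (simp add: v)
  obtain g where g: "[\<gamma>*g = 1] (mod D1)" using inv_exists[OF cg1] .
  from P obtain Y Z where YZ: "[Y*B1 + Z*C1 = 1] (mod D1)" by (auto simp: v PP_simp um_iff)
  have n1: "[N1 D1 D2 v = Y*D2 - Z*B2] (mod D1)"
    unfolding v by (rule N1_any[OF YZ PP_mod1[OF P[unfolded v]]])
  have n1': "[N1 D1 D2 (sc \<gamma> v) = Y*D2 - (Z*g)*(\<gamma>*B2)] (mod D1)"
    unfolding v sc_simp by (rule N1_any[OF um_scale[OF YZ g] PP_mod1[OF P']])
  have "[Y*D2 - (Z*g)*(\<gamma>*B2) = Y*D2 - Z*B2*1] (mod D1)"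
  proof -
    have eq: "Y*D2 - (Z*g)*(\<gamma>*B2) = Y*D2 - Z*B2*(\<gamma>*g)" by (simp add: algebra_simps)
    have "[Y*D2 - Z*B2*(\<gamma>*g) = Y*D2 - Z*B2*1] (mod D1)" by (intro cong_diff cong_mult cong_refl g)
    thus ?thesis unfolding eq .
  qed
  hence N1eq: "[N1 D1 D2 (sc \<gamma> v) = N1 D1 D2 v] (mod D1)" using n1 n1' by (metis mult_1_right cong_sym cong_trans)
  from P obtain Y2 Z2 where YZ2: "[Y2*B2 + Z2*C2 = 1] (mod D2)" by (auto simp: v PP_simp um_iff)
  have n2: "[N2 D1 D2 v = Y2*D1 - Z2*B1] (mod D2)"
    unfolding v by (rule N2_any[OF YZ2 PP_mod2[OF P[unfolded v]]])
  have YZ2': "[(Y2*b)*(\<gamma>*B2) + (Z2*b)*(\<gamma>*C2) = 1] (mod D2)"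
  proof -
    have "(Y2*b)*(\<gamma>*B2) + (Z2*b)*(\<gamma>*C2) = (\<gamma>*b)*(Y2*B2 + Z2*C2)" by (simp add: algebra_simps)
    moreover have "[(\<gamma>*b)*(Y2*B2 + Z2*C2) = 1*1] (mod D2)" by (intro cong_mult gb YZ2)
    ultimately show ?thesis by simp
  qed
  have n2': "[N2 D1 D2 (sc \<gamma> v) = (Y2*b)*D1 - (Z2*b)*B1] (mod D2)"
    unfolding v sc_simp by (rule N2_any[OF YZ2' PP_mod2[OF P']])
  have "[b * N2 D1 D2 v = b * (Y2*D1 - Z2*B1)] (mod D2)" by (intro cong_mult cong_refl n2)
  hence N2eq: "[1 * N2 D1 D2 (sc \<gamma> v) = b * N2 D1 D2 v] (mod D2)"
    using n2' by (simp add: algebra_simps) (metis cong_sym cong_trans)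
  have c1: "[\<gamma>*B2 = \<gamma>*u] (mod D2) \<longleftrightarrow> [B2 = u] (mod D2)" by (rule cong_mult_lcancel[OF cg2])
  have c2: "[N1 D1 D2 (sc \<gamma> v) = t] (mod D1) \<longleftrightarrow> [N1 D1 D2 v = t] (mod D1)"
    using N1eq by (meson cong_sym cong_trans)
  have e2: "ee (of_int (1 * N2 D1 D2 (sc \<gamma> v)) / of_int D2) = ee (of_int (b * N2 D1 D2 v) / of_int D2)"
    using ee_cong[OF N2eq] pos by simp
  show ?thesis unfolding fG_def using c1 c2 e2 by (simp add: v del: mult_1)
qed

end


lemma FF_cong:
  assumes "[a = a'] (mod D1)" "[b = b'] (mod D2)" "[t = t'] (mod D1)" "D1 \<noteq> 0" "D2 \<noteq> 0"
  shows "FF D1 D2 a b t = FF D1 D2 a' b' t'"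
  unfolding FF_def using G_cong[OF assms(1,2) cong_refl assms(3-5)] by simp

lemma rel_of_red_eq':
  assumes "red m1 m2 x = red m1 m2 y" shows "rel m1 m2 x y"
  using red_rel[of m1 m2 x] rel_sym[OF red_rel[of m1 m2 y]] assms by (metis rel_trans)

context scal begin

definition psi :: "tup \<Rightarrow> tup" where "psi v = red D1 D2 (sc \<gamma> v)"

lemma psi_into: "v \<in> Tset D1 D2 \<Longrightarrow> psi v \<in> Tset D1 D2"
  unfolding psi_def Tset_alt using red_box[OF pos] PP_rel[OF sc_PP red_rel] by simp

lemma psi_inj: "inj_on psi (Tset D1 D2)"
proof (rule inj_onI)
  fix v w assume v: "v \<in> Tset D1 D2" and w: "w \<in> Tset D1 D2" and eq: "psi v = psi w"
  obtain B1 C1 B2 C2 where vv: "v = (B1,C1,B2,C2)" by (cases v) auto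
  obtain B1' C1' B2' C2' where ww: "w = (B1',C1',B2',C2')" by (cases w) auto
  have "rel D1 D2 (sc \<gamma> v) (sc \<gamma> w)" using eq unfolding psi_def by (rule rel_of_red_eq')
  then obtain k l where c: "B1' = B1 + D1*k" "\<gamma>*B2' = \<gamma>*B2 + D2*l"
       "[\<gamma>*C1' = \<gamma>*C1 - l*B1] (mod D1)" "[\<gamma>*C2' = \<gamma>*C2 - k*(\<gamma>*B2)] (mod D2)"
    by (auto simp: vv ww rel_simp)
  have bx: "B1 \<in> {0..<D1}" "B1' \<in> {0..<D1}" "C1 \<in> {0..<D1}" "C1' \<in> {0..<D1}"
     "B2 \<in> {0..<D2}" "B2' \<in> {0..<D2}" "C2 \<in> {0..<D2}" "C2' \<in> {0..<D2}"
    using v w by (auto simp: vv ww Tset_def)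
  have "[B1' = B1] (mod D1)" unfolding c(1) by (rule cong_shift)
  hence b1: "B1' = B1" using bx by (auto intro: cong_less_imp_eq_int)
  have "[\<gamma>*B2' = \<gamma>*B2] (mod D2)" unfolding c(2) by (rule cong_shift)
  hence "[B2' = B2] (mod D2)" using cong_mult_lcancel[OF cg2] by blast
  hence b2: "B2' = B2" using bx by (auto intro: cong_less_imp_eq_int)
  have kl: "k = 0" "l = 0" using b1 b2 c(1,2) pos by auto
  have "[\<gamma>*C1' = \<gamma>*C1] (mod D1)" using c(3) kl by simp
  hence "[C1' = C1] (mod D1)" using cong_mult_lcancel[OF cg1] by blast
  hence "C1' = C1" using bx by (auto intro: cong_less_imp_eq_int)
  moreover have "[\<gamma>*C2' = \<gamma>*C2] (mod D2)" using c(4) kl by simp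
  hence "[C2' = C2] (mod D2)" using cong_mult_lcancel[OF cg2] by blast
  hence "C2' = C2" using bx by (auto intro: cong_less_imp_eq_int)
  ultimately show "v = w" using b1 b2 by (simp add: vv ww)
qed

lemma psi_bij: "bij_betw psi (Tset D1 D2) (Tset D1 D2)"
  unfolding bij_betw_def using psi_inj endo_inj_surj[OF finite_Tset _ psi_inj] psi_into by blast

lemma G_scale: "G D1 D2 a b u t = G D1 D2 a 1 (\<gamma>*u) t"
proof -
  have "G D1 D2 a b u t = (\<Sum>v\<in>Tset D1 D2. fG D1 D2 a 1 (\<gamma>*u) t (psi v))"
    unfolding G_def
  proof (rule sum.cong[OF refl])
    fix v assume "v \<in> Tset D1 D2"
    hence P: "PP D1 D2 v" by (simp add: Tset_alt)
    show "fG D1 D2 a b u t v = fG D1 D2 a 1 (\<gamma>*u) t (psi v)"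
      unfolding psi_def using fG_red[OF sc_PP[OF P] pos] sc_fG[OF P] by simp
  qed
  also have "\<dots> = G D1 D2 a 1 (\<gamma>*u) t"
    unfolding G_def by (rule sum.reindex_bij_betw[OF psi_bij])
  finally show ?thesis .
qed

lemma FF_scale: "FF D1 D2 a b t = FF D1 D2 a 1 t"
proof -
  define h where "h u = (\<gamma>*u) mod D2" for u
  have inj: "inj_on h {0..<D2}"
  proof (rule inj_onI)
    fix x y assume x: "x \<in> {0..<D2}" and y: "y \<in> {0..<D2}" and "h x = h y"
    hence "[\<gamma>*x = \<gamma>*y] (mod D2)" by (simp add: h_def cong_def)
    hence "[x = y] (mod D2)" using cong_mult_lcancel[OF cg2] by blast
    thus "x = y" using x y by (auto intro: cong_less_imp_eq_int)
  qed
  have sub: "h ` {0..<D2} \<subseteq> {0..<D2}" using pos by (auto simp: h_def)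
  have bij: "bij_betw h {0..<D2} {0..<D2}"
    unfolding bij_betw_def using inj endo_inj_surj[OF _ sub inj] by simp
  have "FF D1 D2 a b t = (\<Sum>u\<in>{0..<D2}. cmod (G D1 D2 a 1 (h u) t))"
    unfolding FF_def
  proof (rule sum.cong[OF refl])
    fix u
    have "G D1 D2 a b u t = G D1 D2 a 1 (\<gamma>*u) t" by (rule G_scale)
    also have "\<dots> = G D1 D2 a 1 (h u) t" using pos by (intro G_cong) (auto simp: h_def cong_def)
    finally show "cmod (G D1 D2 a b u t) = cmod (G D1 D2 a 1 (h u) t)" by simp
  qed
  also have "\<dots> = FF D1 D2 a 1 t"
    unfolding FF_def by (rule sum.reindex_bij_betw[OF bij, where g = "\<lambda>u. cmod (G D1 D2 a 1 u t)"])
  finally show ?thesis .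
qed

end

lemma FF_scale_gen:
  assumes "D1 > 0" "D2 > 0" "coprime b D2"
  shows "FF D1 D2 a b t = FF D1 D2 a 1 t"
proof -
  obtain g where g: "[b*g = 1] (mod D2)" using inv_exists[OF assms(3)] .
  have "coprime g D2" using g by (metis coprime_iff_invertible_int mult.commute)
  then obtain \<gamma> where \<gamma>: "[\<gamma> = g] (mod D2)" "coprime \<gamma> D1"
    using unit_lift[of g D2 D1] assms(1) by auto
  have "[\<gamma>*b = g*b] (mod D2)" by (intro cong_mult cong_refl \<gamma>(1))
  hence "[\<gamma>*b = 1] (mod D2)" using g by (metis mult.commute cong_trans)
  then interpret scal D1 D2 \<gamma> b using assms \<gamma>(2) by unfold_locales auto
  show ?thesis by (rule FF_scale)
qed



definition W :: "int \<Rightarrow> int \<Rightarrow> int \<Rightarrow> real set" where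
  "W D1 D2 t = (\<lambda>(\<alpha>,\<beta>,s). FF D1 D2 \<alpha> \<beta> (s*t)) ` {(\<alpha>,\<beta>,s). \<alpha> \<in> {0..<D1} \<and> \<beta> \<in> {0..<D2} \<and> s \<in> {0..<D1} \<and>
      coprime \<alpha> D1 \<and> coprime \<beta> D2 \<and> coprime s D1}"

lemma finite_W: "finite (W D1 D2 t)"
proof -
  have "{(\<alpha>,\<beta>,s). \<alpha> \<in> {0..<D1} \<and> \<beta> \<in> {0..<D2} \<and> s \<in> {0..<D1} \<and>
      coprime \<alpha> D1 \<and> coprime \<beta> D2 \<and> coprime s D1} \<subseteq> {0..<D1} \<times> {0..<D2} \<times> {0..<D1}" by auto
  hence "finite {(\<alpha>,\<beta>,s). \<alpha> \<in> {0..<D1} \<and> \<beta> \<in> {0..<D2} \<and> s \<in> {0..<D1} \<and>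
      coprime \<alpha> D1 \<and> coprime \<beta> D2 \<and> coprime s D1}" by (rule finite_subset) simp
  thus ?thesis unfolding W_def by simp
qed

lemma memW:
  assumes "D1 > 0" "D2 > 0" "coprime \<alpha> D1" "coprime \<beta> D2" "coprime s D1"
  shows "FF D1 D2 \<alpha> \<beta> (s*t) \<in> W D1 D2 t"
proof -
  have "FF D1 D2 \<alpha> \<beta> (s*t) = FF D1 D2 (\<alpha> mod D1) (\<beta> mod D2) ((s mod D1)*t)"
    using assms(1,2) by (intro FF_cong) (auto simp: cong_def mod_mult_left_eq)
  moreover have "(\<alpha> mod D1, \<beta> mod D2, s mod D1) \<in> {(\<alpha>,\<beta>,s). \<alpha> \<in> {0..<D1} \<and> \<beta> \<in> {0..<D2} \<and> s \<in> {0..<D1} \<and>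
      coprime \<alpha> D1 \<and> coprime \<beta> D2 \<and> coprime s D1}"
    using assms by simp
  ultimately show ?thesis unfolding W_def
    by (intro image_eqI[where x="(\<alpha> mod D1, \<beta> mod D2, s mod D1)"]) simp_all
qed

lemma W_cases:
  assumes "x \<in> W D1 D2 t"
  obtains \<alpha> \<beta> s where "coprime \<alpha> D1" "coprime \<beta> D2" "coprime s D1" "x = FF D1 D2 \<alpha> \<beta> (s*t)"
  using assms unfolding W_def by auto

lemma W_nonneg: "x \<in> W D1 D2 t \<Longrightarrow> x \<ge> 0"
  by (auto elim!: W_cases simp: FF_def intro!: sum_nonneg)

lemma W_ne: "D1 > 0 \<Longrightarrow> D2 > 0 \<Longrightarrow> W D1 D2 t \<noteq> {}"
  using memW[of D1 D2 1 1 1 t] by auto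

lemma calR_W:
  assumes "D1 > 0" "D2 > 0"
  shows "calR t D1 D2 = Sup (W D1 D2 t)"
proof -
  have val: "(\<lambda>(a, b). \<Sum>u \<in> {0..<D2}. cmod (kl3_hat a u (b * t) 1 D1 D2)) (a, b) = FF D1 D2 a 1 (b*t)" for a b
    using hat_G[OF assms] by (simp add: FF_def)
  have "(\<lambda>(a, b). \<Sum>u \<in> {0..<D2}. cmod (kl3_hat a u (b * t) 1 D1 D2)) ` {(a, b). coprime (a * b) D1} = W D1 D2 t"
  proof
    show "(\<lambda>(a, b). \<Sum>u \<in> {0..<D2}. cmod (kl3_hat a u (b * t) 1 D1 D2)) ` {(a, b). coprime (a * b) D1} \<subseteq> W D1 D2 t"
    proof
      fix x assume "x \<in> (\<lambda>(a, b). \<Sum>u \<in> {0..<D2}. cmod (kl3_hat a u (b * t) 1 D1 D2)) ` {(a, b). coprime (a * b) D1}"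
      then obtain a b where ab: "coprime (a*b) D1" "x = FF D1 D2 a 1 (b*t)" using val by auto
      thus "x \<in> W D1 D2 t" using memW[OF assms, of a 1 b t] by simp
    qed
    show "W D1 D2 t \<subseteq> (\<lambda>(a, b). \<Sum>u \<in> {0..<D2}. cmod (kl3_hat a u (b * t) 1 D1 D2)) ` {(a, b). coprime (a * b) D1}"
    proof
      fix x assume "x \<in> W D1 D2 t"
      then obtain \<alpha> \<beta> s where h: "coprime \<alpha> D1" "coprime \<beta> D2" "coprime s D1" "x = FF D1 D2 \<alpha> \<beta> (s*t)"
        by (rule W_cases)
      have "x = FF D1 D2 \<alpha> 1 (s*t)" using h FF_scale_gen[OF assms h(2)] by simp
      also have "\<dots> = (\<lambda>(a, b). \<Sum>u \<in> {0..<D2}. cmod (kl3_hat a u (b * t) 1 D1 D2)) (\<alpha>, s)" using val by simp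
      finally show "x \<in> (\<lambda>(a, b). \<Sum>u \<in> {0..<D2}. cmod (kl3_hat a u (b * t) 1 D1 D2)) ` {(a, b). coprime (a * b) D1}"
        using h by (auto intro!: image_eqI[where x="(\<alpha>, s)"])
    qed
  qed
  thus ?thesis unfolding calR_def by simp
qed

lemma Sup_prod:
  fixes A B :: "real set"
  assumes "finite A" "finite B" "A \<noteq> {}" "B \<noteq> {}" "\<forall>x\<in>A. x \<ge> 0" "\<forall>y\<in>B. y \<ge> 0"
  shows "Sup {x*y | x y. x \<in> A \<and> y \<in> B} = Sup A * Sup B"
proof -
  define C where "C = {x*y | x y. x \<in> A \<and> y \<in> B}"
  have C: "C = (\<lambda>(x,y). x*y) ` (A \<times> B)" unfolding C_def by auto
  have fC: "finite C" using assms(1,2) by (simp add: C)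
  have mA: "0 \<le> Max A" using assms(1,3,5) Max_in by blast
  have mB: "0 \<le> Max B" using assms(2,4,6) Max_in by blast
  have "Max C = Max A * Max B"
  proof (rule Max_eqI[OF fC])
    fix z assume "z \<in> C"
    then obtain x y where xy: "x \<in> A" "y \<in> B" "z = x*y" unfolding C_def by blast
    have "x \<le> Max A" using xy assms by simp
    moreover have "y \<le> Max B" using xy assms by simp
    moreover have "0 \<le> y" using xy assms by simp
    ultimately have "x * y \<le> Max A * Max B" using mult_mono mA by blast
    thus "z \<le> Max A * Max B" using xy by simp
  next
    have "Max A \<in> A" "Max B \<in> B" using assms by simp_all
    thus "Max A * Max B \<in> C" unfolding C_def by blast
  qed
  moreover have "C \<noteq> {}" using assms(3,4) unfolding C_def by auto
  ultimately show ?thesis using assms fC by (simp add: C_def[symmetric] cSup_eq_Max)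
qed



lemma bez_cong: "p*e + q*c = 1 \<Longrightarrow> [p*e = (1::int)] (mod c)"
  unfolding cong_iff_lin by (intro exI[of _ q]) (simp add: algebra_simps)

lemma bez_obtain:
  fixes e c :: int assumes "coprime e c" obtains p q where "p*e + q*c = 1"
proof -
  obtain p q where "p*e + q*c = gcd e c" using bezout_int by blast
  thus ?thesis using assms that by simp
qed

lemma inv_coprime: "[e*i = (1::int)] (mod c) \<Longrightarrow> coprime i c"
  using coprime_iff_invertible_int by (metis mult.commute)

context crt4 begin

lemma W_mult: "W D1 D2 t = {x*y | x y. x \<in> W c1 c2 t \<and> y \<in> W e1 e2 t}"
proof -
  obtain p1 q1 where pq1: "p1*e1 + q1*c1 = 1" using bez_obtain[OF cops(5)] .
  obtain q2 p2 where qp2: "q2*c2 + p2*e2 = 1" using bez_obtain[OF cops(4)] .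
  have pq2: "p2*e2 + q2*c2 = 1" using qp2 by simp
  have qp1: "q1*c1 + p1*e1 = 1" using pq1 by simp
  obtain i1 where i1: "[e2*i1 = 1] (mod c1)" using inv_exists[OF cops(6)] .
  obtain j1 where j1: "[c2*j1 = 1] (mod e1)" using inv_exists[OF cops(3)] .
  obtain i2 where i2: "[e1*i2 = 1] (mod c2)" using inv_exists[OF cops(7)] .
  obtain j2 where j2: "[c1*j2 = 1] (mod e2)" using inv_exists[OF cops(2)] .
  have b1: "[p1*e1 = 1] (mod c1)" by (rule bez_cong[OF pq1])
  have b1': "[q1*c1 = 1] (mod e1)" by (rule bez_cong[OF qp1])
  have b2: "[p2*e2 = 1] (mod c2)" by (rule bez_cong[OF pq2])
  have b2': "[q2*c2 = 1] (mod e2)" by (rule bez_cong[OF qp2])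
  have cp1: "coprime p1 c1" using inv_coprime[of e1 p1 c1] b1 by (simp add: mult.commute)
  have cq1: "coprime q1 e1" using inv_coprime[of c1 q1 e1] b1' by (simp add: mult.commute)
  have cp2: "coprime p2 c2" using inv_coprime[of e2 p2 c2] b2 by (simp add: mult.commute)
  have cq2: "coprime q2 e2" using inv_coprime[of c2 q2 e2] b2' by (simp add: mult.commute)
  have ci1: "coprime i1 c1" by (rule inv_coprime[OF i1])
  have cj1: "coprime j1 e1" by (rule inv_coprime[OF j1])
  have ci2: "coprime i2 c2" by (rule inv_coprime[OF i2])
  have cj2: "coprime j2 e2" by (rule inv_coprime[OF j2])
  have D0: "D1 > 0" "D2 > 0" using pos by (simp_all add: D1 D2)
  show ?thesis
  proof
    show "W D1 D2 t \<subseteq> {x*y | x y. x \<in> W c1 c2 t \<and> y \<in> W e1 e2 t}"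
    proof
      fix z assume "z \<in> W D1 D2 t"
      then obtain \<alpha> \<beta> s where h: "coprime \<alpha> D1" "coprime \<beta> D2" "coprime s D1" "z = FF D1 D2 \<alpha> \<beta> (s*t)"
        by (rule W_cases)
      have ha: "coprime \<alpha> c1" "coprime \<alpha> e1" using h(1) by (simp_all add: D1)
      have hb: "coprime \<beta> c2" "coprime \<beta> e2" using h(2) by (simp_all add: D2)
      have hs: "coprime s c1" "coprime s e1" using h(3) by (simp_all add: D1)
      have "z = FF c1 c2 (\<alpha>*p1) (\<beta>*p2*e1) (i1 * s * t) * FF e1 e2 (\<alpha>*q1) (\<beta>*q2*c1) (j1 * s * t)"
        using FF_mult[OF pq1 pq2 i1 j1, of \<alpha> \<beta> "s*t"] h(4) by (simp add: mult.assoc)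
      moreover have "FF c1 c2 (\<alpha>*p1) (\<beta>*p2*e1) (i1 * s * t) \<in> W c1 c2 t"
        using ha hb hs cp1 cp2 ci1 cops pos by (intro memW) auto
      moreover have "FF e1 e2 (\<alpha>*q1) (\<beta>*q2*c1) (j1 * s * t) \<in> W e1 e2 t"
        using ha hb hs cq1 cq2 cj1 cops pos by (intro memW) auto
      ultimately show "z \<in> {x*y | x y. x \<in> W c1 c2 t \<and> y \<in> W e1 e2 t}" by blast
    qed
    show "{x*y | x y. x \<in> W c1 c2 t \<and> y \<in> W e1 e2 t} \<subseteq> W D1 D2 t"
    proof
      fix z assume "z \<in> {x*y | x y. x \<in> W c1 c2 t \<and> y \<in> W e1 e2 t}"
      then obtain x y where z: "z = x*y" and x: "x \<in> W c1 c2 t" and y: "y \<in> W e1 e2 t" by blast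
      from x obtain a1 b1' s1 where hx: "coprime a1 c1" "coprime b1' c2" "coprime s1 c1" "x = FF c1 c2 a1 b1' (s1*t)"
        by (rule W_cases)
      from y obtain a2 b2' s2 where hy: "coprime a2 e1" "coprime b2' e2" "coprime s2 e1" "y = FF e1 e2 a2 b2' (s2*t)"
        by (rule W_cases)
      obtain \<alpha> where \<alpha>: "[\<alpha> = a1*e1] (mod c1)" "[\<alpha> = a2*c1] (mod e1)" using crt_obtain[OF cops(1)] by blast
      obtain \<beta> where \<beta>: "[\<beta> = b1'*e2*i2] (mod c2)" "[\<beta> = b2'*c2*j2] (mod e2)" using crt_obtain[OF cops(4)] by blast
      obtain s where s: "[s = s1*e2] (mod c1)" "[s = s2*c2] (mod e1)" using crt_obtain[OF cops(1)] by blast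
      have "coprime (a1*e1) c1" using hx cops by simp
      hence ca1: "coprime \<alpha> c1" using cong_imp_coprime[OF cong_sym[OF \<alpha>(1)]] by blast
      have "coprime (a2*c1) e1" using hy cops by simp
      hence ca2: "coprime \<alpha> e1" using cong_imp_coprime[OF cong_sym[OF \<alpha>(2)]] by blast
      have "coprime (b1'*e2*i2) c2" using hx cops ci2 by simp
      hence cb1: "coprime \<beta> c2" using cong_imp_coprime[OF cong_sym[OF \<beta>(1)]] by blast
      have "coprime (b2'*c2*j2) e2" using hy cops cj2 by simp
      hence cb2: "coprime \<beta> e2" using cong_imp_coprime[OF cong_sym[OF \<beta>(2)]] by blast
      have "coprime (s1*e2) c1" using hx cops by simp
      hence cs1: "coprime s c1" using cong_imp_coprime[OF cong_sym[OF s(1)]] by blast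
      have "coprime (s2*c2) e1" using hy cops by simp
      hence cs2: "coprime s e1" using cong_imp_coprime[OF cong_sym[OF s(2)]] by blast
      have "[\<alpha>*p1 = a1] (mod c1)"
      proof -
        have "[\<alpha>*p1 = (a1*e1)*p1] (mod c1)" by (intro cong_mult cong_refl \<alpha>(1))
        also have "(a1*e1)*p1 = a1*(p1*e1)" by (simp add: mult_ac)
        also have "[\<dots> = a1*1] (mod c1)" by (intro cong_mult cong_refl b1)
        finally show ?thesis by simp
      qed
      moreover have "[\<beta>*p2*e1 = b1'] (mod c2)"
      proof -
        have "[\<beta>*p2*e1 = (b1'*e2*i2)*p2*e1] (mod c2)" by (intro cong_mult cong_refl \<beta>(1))
        also have "(b1'*e2*i2)*p2*e1 = b1'*((p2*e2)*(e1*i2))" by (simp add: mult_ac)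
        also have "[\<dots> = b1'*(1*1)] (mod c2)" by (intro cong_mult cong_refl b2 i2)
        finally show ?thesis by simp
      qed
      moreover have "[i1*(s*t) = s1*t] (mod c1)"
      proof -
        have "[i1*(s*t) = i1*((s1*e2)*t)] (mod c1)" by (intro cong_mult cong_refl s(1))
        also have "i1*((s1*e2)*t) = (e2*i1)*(s1*t)" by (simp add: mult_ac)
        also have "[\<dots> = 1*(s1*t)] (mod c1)" by (intro cong_mult cong_refl i1)
        finally show ?thesis by simp
      qed
      ultimately have fx: "FF c1 c2 (\<alpha>*p1) (\<beta>*p2*e1) (i1*(s*t)) = x"
        using hx(4) pos by (simp add: FF_cong)
      have "[\<alpha>*q1 = a2] (mod e1)"
      proof -
        have "[\<alpha>*q1 = (a2*c1)*q1] (mod e1)" by (intro cong_mult cong_refl \<alpha>(2))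
        also have "(a2*c1)*q1 = a2*(q1*c1)" by (simp add: mult_ac)
        also have "[\<dots> = a2*1] (mod e1)" by (intro cong_mult cong_refl b1')
        finally show ?thesis by simp
      qed
      moreover have "[\<beta>*q2*c1 = b2'] (mod e2)"
      proof -
        have "[\<beta>*q2*c1 = (b2'*c2*j2)*q2*c1] (mod e2)" by (intro cong_mult cong_refl \<beta>(2))
        also have "(b2'*c2*j2)*q2*c1 = b2'*((q2*c2)*(c1*j2))" by (simp add: mult_ac)
        also have "[\<dots> = b2'*(1*1)] (mod e2)" by (intro cong_mult cong_refl b2' j2)
        finally show ?thesis by simp
      qed
      moreover have "[j1*(s*t) = s2*t] (mod e1)"
      proof -
        have "[j1*(s*t) = j1*((s2*c2)*t)] (mod e1)" by (intro cong_mult cong_refl s(2))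
        also have "j1*((s2*c2)*t) = (c2*j1)*(s2*t)" by (simp add: mult_ac)
        also have "[\<dots> = 1*(s2*t)] (mod e1)" by (intro cong_mult cong_refl j1)
        finally show ?thesis by simp
      qed
      ultimately have fy: "FF e1 e2 (\<alpha>*q1) (\<beta>*q2*c1) (j1*(s*t)) = y"
        using hy(4) pos by (simp add: FF_cong)
      have "z = FF D1 D2 \<alpha> \<beta> (s*t)"
        using FF_mult[OF pq1 pq2 i1 j1, of \<alpha> \<beta> "s*t"] fx fy z by simp
      moreover have "coprime \<alpha> D1" "coprime \<beta> D2" "coprime s D1"
        using ca1 ca2 cb1 cb2 cs1 cs2 by (simp_all add: D1 D2)
      ultimately show "z \<in> W D1 D2 t" using memW[OF D0] by simp
    qed
  qed
qed

end

theorem lemma4: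
  fixes t C1 C2 E1 E2 :: int
  assumes "C1 > 0" "C2 > 0" "E1 > 0" "E2 > 0"
    and "coprime (C1 * C2) (E1 * E2)"
  shows "calR t (C1 * E1) (C2 * E2) = calR t C1 C2 * calR t E1 E2"
proof -
  interpret crt4 C1 C2 E1 E2 "C1*E1" "C2*E2" using assms by unfold_locales auto
  have "calR t (C1 * E1) (C2 * E2) = Sup (W (C1*E1) (C2*E2) t)" using assms by (intro calR_W) auto
  also have "\<dots> = Sup {x*y | x y. x \<in> W C1 C2 t \<and> y \<in> W E1 E2 t}" by (simp add: W_mult)
  also have "\<dots> = Sup (W C1 C2 t) * Sup (W E1 E2 t)"
    using assms by (intro Sup_prod finite_W W_ne ballI W_nonneg) auto
  also have "\<dots> = calR t C1 C2 * calR t E1 E2" using assms by (simp add: calR_W)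
  finally show ?thesis .
qed


end
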